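(* If $(A_n)_{n=0}^\infty$ is an Appell sequence with constants $c_n$ defined by $\log f_A(t)=\sum_{k\ge1}c_k\frac{t^k}{k!}$, then for all partitions $\lambda$, \begin{align*} (\lvert \lambda \rvert +1) (x+c_1) F_\lambda A_\lambda &= \sum_{\gamma \gtrdot \lambda} F_\gamma A_\gamma,\\ k c_k \binom{\lvert \lambda \rvert +k}{k} F_\lambda A_\lambda &= \sum_{\gamma:\ \gamma/\lambda \text{ is a rim hook of size } k} (-1)^{\operatorname{ht}(\gamma/\lambda)} F_\gamma A_\gamma \qquad (k \geq 2), \end{align*} where in the first sum $\gamma$ ranges over partitions covering $\lambda$ in Young's lattice (obtained by adding one cell).
   Context: An Appell sequence is a sequence of polynomials $(A_n)_{n\ge0}$ with $A_0=1$ and $A_n'=nA_{n-1}$ for $n\ge1$; it satisfies $\sum_k A_k(x)t^k/k!=e^{xt}f_A(t)$ with $f_A(0)=1$. For a partition $\lambda$ of length $r$, let $(n_1,\dots,n_r)=(\lambda_r,\lambda_{r-1}+1,\dots,\lambda_1+r-1)$ and $A_\lambda=\operatorname{Wr}[A_{n_1},\dots,A_{n_r}]/\Delta(n_1,\dots,n_r)$, where $\operatorname{Wr}$ is the Wronskian and $\Delta$ the Vandermonde determinant $\prod_{i<j}(x_j-x_i)$. $F_\lambda$ is the number of standard Young tableaux of shape $\lambda$. A rim hook of size $k$ is a skew diagram $\gamma/\lambda$ with $|\gamma|-|\lambda|=k$ that is connected and contains no $2\times2$ square; its height $\operatorname{ht}(\gamma/\lambda)$ is one less than the number of rows it occupies.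 *)

theory Defs
  imports "HOL-Computational_Algebra.Polynomial" "HOL-Computational_Algebra.Formal_Power_Series"
    "Jordan_Normal_Form.Determinant"
begin

definition appell :: "(nat \<Rightarrow> 'a::field_char_0 poly) \<Rightarrow> bool" where
  "appell A \<longleftrightarrow> A 0 = 1 \<and> (\<forall>n\<ge>1. pderiv (A n) = smult (of_nat n) (A (n - 1)))"

text \<open>f_A(t) = sum_k A_k(0) t^k/k!, so that sum_k A_k(x) t^k/k! = e^{xt} f_A(t).\<close>
definition appell_f :: "(nat \<Rightarrow> 'a::field_char_0 poly) \<Rightarrow> 'a fps" where
  "appell_f A = Abs_fps (\<lambda>k. poly (A k) 0 / fact k)"

text \<open>Formal logarithm of a power series with constant term 1: log f = ln(1+X) composed with f - 1.\<close>
definition fps_log :: "'a::field_char_0 fps \<Rightarrow> 'a fps" where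
  "fps_log f = fps_ln 1 oo (f - 1)"

definition is_partition :: "nat list \<Rightarrow> bool" where
  "is_partition la \<longleftrightarrow> sorted_wrt (\<ge>) la \<and> (\<forall>x\<in>set la. 0 < x)"

definition psize :: "nat list \<Rightarrow> nat" where
  "psize la = sum_list la"

text \<open>Cells (row, column), 0-indexed.\<close>
definition diagram :: "nat list \<Rightarrow> (nat \<times> nat) set" where
  "diagram la = {(i, j). i < length la \<and> j < la ! i}"

definition SYT :: "nat list \<Rightarrow> ((nat \<times> nat) \<Rightarrow> nat) set" where
  "SYT la = {T. bij_betw T (diagram la) {1..psize la} \<and> (\<forall>c. c \<notin> diagram la \<longrightarrow> T c = 0) \<and>
     (\<forall>i j. (i, Suc j) \<in> diagram la \<longrightarrow> T (i, j) < T (i, Suc j)) \<and>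
     (\<forall>i j. (Suc i, j) \<in> diagram la \<longrightarrow> T (i, j) < T (Suc i, j))}"

definition num_SYT :: "nat list \<Rightarrow> nat" ("F") where
  "num_SYT la = card (SYT la)"

definition covers :: "nat list \<Rightarrow> nat list \<Rightarrow> bool" where
  "covers ga la \<longleftrightarrow> is_partition ga \<and> is_partition la \<and> diagram la \<subseteq> diagram ga \<and> psize ga = psize la + 1"

definition skew :: "nat list \<Rightarrow> nat list \<Rightarrow> (nat \<times> nat) set" where
  "skew ga la = diagram ga - diagram la"

definition adjacent :: "nat \<times> nat \<Rightarrow> nat \<times> nat \<Rightarrow> bool" where
  "adjacent c d \<longleftrightarrow> (fst c = fst d \<and> (snd c = Suc (snd d) \<or> snd d = Suc (snd c))) \<or>
                     (snd c = snd d \<and> (fst c = Suc (fst d) \<or> fst d = Suc (fst c)))"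

definition cell_connected :: "(nat \<times> nat) set \<Rightarrow> bool" where
  "cell_connected S \<longleftrightarrow> S \<noteq> {} \<and>
     (\<forall>c\<in>S. \<forall>d\<in>S. (\<lambda>x y. x \<in> S \<and> y \<in> S \<and> adjacent x y)\<^sup>*\<^sup>* c d)"

definition no_2x2 :: "(nat \<times> nat) set \<Rightarrow> bool" where
  "no_2x2 S \<longleftrightarrow> \<not> (\<exists>i j. {(i, j), (Suc i, j), (i, Suc j), (Suc i, Suc j)} \<subseteq> S)"

definition rim_hook :: "nat list \<Rightarrow> nat list \<Rightarrow> nat \<Rightarrow> bool" where
  "rim_hook ga la k \<longleftrightarrow> is_partition ga \<and> is_partition la \<and> diagram la \<subseteq> diagram ga \<and>
     psize ga = psize la + k \<and> cell_connected (skew ga la) \<and> no_2x2 (skew ga la)"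

definition ht :: "nat list \<Rightarrow> nat list \<Rightarrow> nat" where
  "ht ga la = card (fst ` skew ga la) - 1"

definition wronskian :: "'a::idom poly list \<Rightarrow> 'a poly" where
  "wronskian ps = det (mat (length ps) (length ps) (\<lambda>(i, j). (pderiv ^^ i) (ps ! j)))"

definition vandermonde :: "nat list \<Rightarrow> int" where
  "vandermonde ns = (\<Prod>j<length ns. \<Prod>i<j. int (ns ! j) - int (ns ! i))"

text \<open>(n_1,...,n_r) = (lambda_r, lambda_{r-1}+1, ..., lambda_1+r-1), 0-indexed here.\<close>
definition shifted_parts :: "nat list \<Rightarrow> nat list" where
  "shifted_parts la = map (\<lambda>i. la ! (length la - 1 - i) + i) [0..<length la]"

definition appell_schur :: "(nat \<Rightarrow> 'a::field_char_0 poly) \<Rightarrow> nat list \<Rightarrow> 'a poly" where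
  "appell_schur A la = smult (1 / of_int (vandermonde (shifted_parts la)))
     (wronskian (map A (shifted_parts la)))"

end

theory Submission
  imports Defs
begin

definition hh :: "(nat \<Rightarrow> 'b::comm_ring_1) \<Rightarrow> nat \<Rightarrow> nat \<Rightarrow> 'b" where
  "hh h m i = (if i \<le> m then h (m - i) else 0)"

definition JT :: "(nat \<Rightarrow> 'b::comm_ring_1) \<Rightarrow> nat list \<Rightarrow> 'b" where
  "JT h ns = det (mat (length ns) (length ns) (\<lambda>(i,j). hh h (ns!j) i))"

lemma det_replace_col:
  assumes A: "A \<in> carrier_mat n n" and k: "k < n"
  shows "det (mat n n (\<lambda>(i,j). if j = k then b i else A $$ (i,j))) = (\<Sum>i<n. b i * cofactor A i k)"
proof -
  let ?M = "mat n n (\<lambda>(i,j). if j = k then b i else A $$ (i,j))"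
  have M: "?M \<in> carrier_mat n n" by auto
  have "det ?M = (\<Sum>i<n. ?M $$ (i,k) * cofactor ?M i k)"
    by (rule laplace_expansion_column[OF M k])
  also have "\<dots> = (\<Sum>i<n. b i * cofactor A i k)"
  proof (rule sum.cong[OF refl])
    fix i assume i: "i \<in> {..<n}"
    have "mat_delete ?M i k = mat_delete A i k"
      using A k i by (intro eq_matI) (auto simp: mat_delete_def)
    then show "?M $$ (i,k) * cofactor ?M i k = b i * cofactor A i k"
      using i k by (simp add: cofactor_def)
  qed
  finally show ?thesis .
qed

lemma adj_row_sum:
  assumes A: "A \<in> carrier_mat n n" and a: "a < n" and i: "i < n"
  shows "(\<Sum>j<n. A $$ (a,j) * cofactor A i j) = (if a = i then det A else 0)"
proof -
  have "(A * adj_mat A) $$ (a,i) = (det A \<cdot>\<^sub>m 1\<^sub>m n) $$ (a,i)" using adj_mat(2)[OF A] by simp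
  moreover have "(A * adj_mat A) $$ (a,i) = (\<Sum>j<n. A $$ (a,j) * cofactor A i j)"
    using A a i adj_mat(1)[OF A] unfolding times_mat_def scalar_prod_def adj_mat_def
    by (auto intro!: sum.cong simp: lessThan_atLeast0)
  ultimately show ?thesis using a i by auto
qed

lemma adj_col_from_solution:
  assumes A: "A \<in> carrier_mat n n" and z: "z \<in> carrier_vec n" and i: "i < n"
    and sol: "A *\<^sub>v z = unit_vec n i" and j: "j < n"
  shows "cofactor A i j = det A * z $ j"
proof -
  have "adj_mat A *\<^sub>v (A *\<^sub>v z) = (adj_mat A * A) *\<^sub>v z"
    using A z adj_mat(1)[OF A] by (metis assoc_mult_mat_vec)
  also have "\<dots> = (det A \<cdot>\<^sub>m 1\<^sub>m n) *\<^sub>v z" using adj_mat(3)[OF A] by simp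
  also have "\<dots> = det A \<cdot>\<^sub>v z" using z by auto
  finally have eq: "adj_mat A *\<^sub>v unit_vec n i = det A \<cdot>\<^sub>v z" using sol by simp
  have "(adj_mat A *\<^sub>v unit_vec n i) $ j = adj_mat A $$ (j, i)"
    using adj_mat(1)[OF A] i j by simp
  also have "\<dots> = cofactor A i j" using A i j by (simp add: adj_mat_def)
  finally show ?thesis using eq z j by simp
qed

lemma sum_triangle_weight:
  fixes f :: "nat \<Rightarrow> 'b::comm_ring_1"
  shows "(\<Sum>i<k. \<Sum>d\<le>i. f d) = (\<Sum>d<k. of_nat (k - d) * f d)"
proof (induction k)
  case 0 then show ?case by simp
next
  case (Suc k)
  have "(\<Sum>d<Suc k. of_nat (Suc k - d) * f d) = (\<Sum>d<k. of_nat (Suc k - d) * f d) + f k" by simp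
  also have "(\<Sum>d<k. of_nat (Suc k - d) * f d) = (\<Sum>d<k. of_nat (k - d) * f d) + (\<Sum>d<k. f d)"
    by (simp add: sum.distrib[symmetric] Suc_diff_le algebra_simps)
  finally show ?case using Suc by (simp add: lessThan_Suc_atMost[symmetric] algebra_simps)
qed

lemma sum_rev_le:
  fixes f :: "nat \<Rightarrow> 'b::comm_monoid_add"
  shows "(\<Sum>j\<le>i. f j) = (\<Sum>d\<le>i. f (i - d))"
  by (rule sum.reindex_bij_witness[where i="\<lambda>d. i - d" and j="\<lambda>j. i - j"]) auto

lemma conv_shift:
  fixes h g :: "nat \<Rightarrow> 'b::comm_ring_1"
  assumes conv: "\<And>m. (\<Sum>d\<le>m. g d * h (m - d)) = (if m = 0 then 1 else 0)"
  shows "(\<Sum>j\<le>i. hh h j a * g (i - j)) = (if a = i then 1 else 0)"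
proof (cases "a \<le> i")
  case True
  have "(\<Sum>j\<le>i. hh h j a * g (i - j)) = (\<Sum>j\<in>{a..i}. h (j - a) * g (i - j))"
  proof -
    have "(\<Sum>j\<le>i. hh h j a * g (i - j)) = (\<Sum>j\<in>{a..i}. hh h j a * g (i - j))"
      by (rule sum.mono_neutral_right) (auto simp: hh_def)
    then show ?thesis by (simp add: hh_def)
  qed
  also have "\<dots> = (\<Sum>d\<le>i - a. g d * h (i - a - d))"
    by (rule sum.reindex_bij_witness[where i="\<lambda>d. i - d" and j="\<lambda>j. i - j"])
       (use True in \<open>auto simp: algebra_simps\<close>)
  also have "\<dots> = (if a = i then 1 else 0)" using conv[of "i - a"] True by auto
  finally show ?thesis .
next
  case False
  then show ?thesis by (auto simp: hh_def intro!: sum.neutral)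
qed

lemma MN_core:
  fixes h g :: "nat \<Rightarrow> 'b::comm_ring_1"
  assumes conv: "\<And>m. (\<Sum>d\<le>m. g d * h (m - d)) = (if m = 0 then 1 else 0)"
    and pre: "\<And>j. j < k \<Longrightarrow> ns ! j = j" and kr: "k \<le> length ns" and k1: "1 \<le> k"
  shows "(\<Sum>j<length ns. JT h (ns[j := ns!j + k])) = (\<Sum>d<k. of_nat (k - d) * g d * h (k - d)) * JT h ns"
proof -
  define r where "r = length ns"
  define V where "V = mat r r (\<lambda>(i,j). hh h (ns!j) i)"
  have V: "V \<in> carrier_mat r r" by (simp add: V_def)
  have JV: "JT h ns = det V" by (simp add: JT_def V_def r_def)
  have step1: "JT h (ns[j := ns!j + k]) = (\<Sum>i<r. hh h (ns!j + k) i * cofactor V i j)" if j: "j < r" for j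
  proof -
    have "JT h (ns[j := ns!j + k]) = det (mat r r (\<lambda>(i,j'). if j' = j then hh h (ns!j + k) i else V $$ (i,j')))"
      unfolding JT_def r_def V_def using j r_def
      by (intro arg_cong[of _ _ det] eq_matI) (auto simp: nth_list_update)
    also have "\<dots> = (\<Sum>i<r. hh h (ns!j + k) i * cofactor V i j)"
      by (rule det_replace_col[OF V j])
    finally show ?thesis .
  qed
  have "(\<Sum>j<r. JT h (ns[j := ns!j + k])) = (\<Sum>j<r. \<Sum>i<r. hh h (ns!j + k) i * cofactor V i j)"
    using step1 by simp
  also have "\<dots> = (\<Sum>i<r. \<Sum>j<r. hh h (ns!j + k) i * cofactor V i j)"
    by (rule sum.swap)
  also have "\<dots> = (\<Sum>i<k. det V * (\<Sum>d\<le>i. g d * h (k - d)))"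
  proof -
    have big: "(\<Sum>j<r. hh h (ns!j + k) i * cofactor V i j) = 0" if i: "i < r" "k \<le> i" for i
    proof -
      have "(\<Sum>j<r. hh h (ns!j + k) i * cofactor V i j) = (\<Sum>j<r. V $$ (i - k, j) * cofactor V i j)"
        using i by (intro sum.cong refl) (auto simp: V_def hh_def)
      also have "\<dots> = 0" using adj_row_sum[OF V, of "i - k" i] i k1 by auto
      finally show ?thesis .
    qed
    have small: "(\<Sum>j<r. hh h (ns!j + k) i * cofactor V i j) = det V * (\<Sum>d\<le>i. g d * h (k - d))"
      if i: "i < k" for i
    proof -
      define z where "z = vec r (\<lambda>j. if j \<le> i then g (i - j) else 0)"
      have z: "z \<in> carrier_vec r" by (simp add: z_def)
      have ir: "i < r" using i kr r_def by simp
      have sol: "V *\<^sub>v z = unit_vec r i"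
      proof (rule eq_vecI)
        fix a assume a: "a < dim_vec (unit_vec r i)"
        then have a: "a < r" by simp
        have "(V *\<^sub>v z) $ a = (\<Sum>j<r. V $$ (a,j) * z $ j)"
          using V z a by (simp add: mult_mat_vec_def scalar_prod_def lessThan_atLeast0)
        also have "\<dots> = (\<Sum>j\<le>i. hh h j a * g (i - j))"
        proof -
          have "(\<Sum>j<r. V $$ (a,j) * z $ j) = (\<Sum>j\<le>i. V $$ (a,j) * z $ j)"
            using ir by (intro sum.mono_neutral_right) (auto simp: z_def)
          also have "\<dots> = (\<Sum>j\<le>i. hh h j a * g (i - j))"
            using ir a i pre by (intro sum.cong refl) (auto simp: V_def z_def)
          finally show ?thesis .
        qed
        also have "\<dots> = (if a = i then 1 else 0)" by (rule conv_shift[OF conv])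
        also have "\<dots> = unit_vec r i $ a" using a ir by (simp add: unit_vec_def)
        finally show "(V *\<^sub>v z) $ a = unit_vec r i $ a" .
      qed (use V in simp)
      have "(\<Sum>j<r. hh h (ns!j + k) i * cofactor V i j) = (\<Sum>j<r. hh h (ns!j + k) i * (det V * z $ j))"
        using adj_col_from_solution[OF V z ir sol] by simp
      also have "\<dots> = (\<Sum>j\<le>i. hh h (j + k) i * (det V * g (i - j)))"
      proof -
        have "(\<Sum>j<r. hh h (ns!j + k) i * (det V * z $ j)) = (\<Sum>j\<le>i. hh h (ns!j + k) i * (det V * z $ j))"
          using ir by (intro sum.mono_neutral_right) (auto simp: z_def)
        also have "\<dots> = (\<Sum>j\<le>i. hh h (j + k) i * (det V * g (i - j)))"
          using ir i pre by (intro sum.cong refl) (auto simp: z_def)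
        finally show ?thesis .
      qed
      also have "\<dots> = det V * (\<Sum>j\<le>i. h (j + k - i) * g (i - j))"
        using i by (simp add: sum_distrib_left hh_def algebra_simps)
      also have "(\<Sum>j\<le>i. h (j + k - i) * g (i - j)) = (\<Sum>d\<le>i. g d * h (k - d))"
        by (subst sum_rev_le) (use i in \<open>auto intro!: sum.cong simp: algebra_simps\<close>)
      finally show ?thesis .
    qed
    have "(\<Sum>i<r. \<Sum>j<r. hh h (ns!j + k) i * cofactor V i j) = (\<Sum>i<k. \<Sum>j<r. hh h (ns!j + k) i * cofactor V i j)"
      using big kr r_def by (intro sum.mono_neutral_right) auto
    also have "\<dots> = (\<Sum>i<k. det V * (\<Sum>d\<le>i. g d * h (k - d)))"
      using small by simp
    finally show ?thesis .
  qed
  also have "\<dots> = det V * (\<Sum>d<k. of_nat (k - d) * (g d * h (k - d)))"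
    by (simp add: sum_distrib_left[symmetric] sum_triangle_weight)
  finally show ?thesis by (simp add: JV r_def sum_distrib_left sum_distrib_right algebra_simps)
qed

lemma JT_pad:
  assumes h0: "h 0 = 1"
  shows "JT h (0 # map Suc ns) = JT h ns"
proof -
  let ?r = "length ns"
  let ?M = "mat (Suc ?r) (Suc ?r) (\<lambda>(i,j). hh h ((0 # map Suc ns)!j) i)"
  have M: "?M \<in> carrier_mat (Suc ?r) (Suc ?r)" by simp
  have "JT h (0 # map Suc ns) = det ?M" by (simp add: JT_def)
  also have "\<dots> = (\<Sum>i<Suc ?r. ?M $$ (i,0) * cofactor ?M i 0)"
    by (rule laplace_expansion_column[OF M]) simp
  also have "\<dots> = (\<Sum>i<Suc ?r. (if i = 0 then cofactor ?M 0 0 else 0))"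
    by (intro sum.cong refl) (auto simp: hh_def h0)
  also have "\<dots> = cofactor ?M 0 0" by simp
  also have "\<dots> = det (mat_delete ?M 0 0)" by (simp add: cofactor_def)
  also have "mat_delete ?M 0 0 = mat ?r ?r (\<lambda>(i,j). hh h (ns!j) i)"
    by (intro eq_matI) (auto simp: mat_delete_def hh_def)
  finally show ?thesis by (simp add: JT_def)
qed

lemma JT_swap:
  "JT h (xs @ a # b # ys) = - JT h (xs @ b # a # ys)"
proof -
  let ?n = "length (xs @ a # b # ys)"
  let ?k = "length xs"
  let ?A = "mat ?n ?n (\<lambda>(i,j). hh h ((xs @ b # a # ys)!j) i)"
  have A: "?A \<in> carrier_mat ?n ?n" by simp
  have "swapcols ?k (Suc ?k) ?A = mat ?n ?n (\<lambda>(i,j). hh h ((xs @ a # b # ys)!j) i)"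
    by (intro eq_matI) (auto simp: mat_swapcols_def nth_append)
  then have "JT h (xs @ a # b # ys) = det (swapcols ?k (Suc ?k) ?A)" by (simp add: JT_def)
  also have "\<dots> = - det ?A" by (rule det_swapcols[OF _ _ _ A]) auto
  finally show ?thesis by (simp add: JT_def)
qed

lemma JT_dup:
  assumes "i < length ns" "j < length ns" "i \<noteq> j" "ns!i = ns!j"
  shows "JT h ns = 0"
  unfolding JT_def
  by (rule det_identical_columns[of _ "length ns" i j]) (use assms in auto)

lemma JT_bubble:
  "JT h (xs @ v # ys @ zs) = (-1) ^ length ys * JT h (xs @ ys @ v # zs)"
proof (induction ys arbitrary: xs)
  case Nil then show ?case by simp
next
  case (Cons y ys)
  have "JT h (xs @ v # (y # ys) @ zs) = - JT h (xs @ y # v # ys @ zs)"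
    using JT_swap[of h xs v y "ys @ zs"] by simp
  also have "JT h (xs @ y # v # ys @ zs) = JT h ((xs @ [y]) @ v # ys @ zs)" by simp
  also have "\<dots> = (-1) ^ length ys * JT h ((xs @ [y]) @ ys @ v # zs)" by (rule Cons.IH)
  finally show ?case by simp
qed

fun ginv :: "(nat \<Rightarrow> 'b::comm_ring_1) \<Rightarrow> nat \<Rightarrow> 'b" where
  "ginv h 0 = 1"
| "ginv h (Suc n) = - (\<Sum>i\<le>n. ginv h i * h (Suc n - i))"

lemma ginv_conv:
  assumes h0: "h 0 = 1"
  shows "(\<Sum>d\<le>m. ginv h d * h (m - d)) = (if m = 0 then 1 else 0)"
proof (cases m)
  case 0 then show ?thesis by (simp add: h0)
next
  case (Suc n)
  have "(\<Sum>d\<le>m. ginv h d * h (m - d)) = (\<Sum>d\<le>n. ginv h d * h (Suc n - d)) + ginv h (Suc n) * h 0"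
    using Suc by simp
  also have "\<dots> = 0" by (simp add: h0)
  finally show ?thesis using Suc by simp
qed

definition Bp :: "(nat \<Rightarrow> 'a::field_char_0 poly) \<Rightarrow> nat \<Rightarrow> 'a poly" where
  "Bp A m = smult (inverse (fact m)) (A m)"

definition pp :: "(nat \<Rightarrow> 'a::field_char_0) \<Rightarrow> nat \<Rightarrow> 'a poly" where
  "pp c l = [: of_nat l * c l / fact l :] + (if l = 1 then [:0,1:] else 0)"

definition liftp :: "'a::comm_ring_1 fps \<Rightarrow> 'a poly fps" where
  "liftp X = Abs_fps (\<lambda>m. [:fps_nth X m:])"

lemma liftp_mult: "liftp (X * Y) = liftp X * liftp Y"
  by (rule fps_ext) (simp add: liftp_def fps_mult_nth sum_to_poly mult_ac)

lemma liftp_deriv: "liftp (fps_deriv X) = fps_deriv (liftp X)"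
  by (rule fps_ext) (simp add: liftp_def of_nat_poly)

lemma poly_eq_by_deriv:
  fixes p q :: "'a::field_char_0 poly"
  assumes "pderiv p = pderiv q" "poly p 0 = poly q 0"
  shows "p = q"
proof -
  have "pderiv (p - q) = 0" using assms by (simp add: pderiv_diff)
  then have "degree (p - q) = 0" by (simp add: pderiv_eq_0_iff)
  then obtain a where a: "p - q = [:a:]" by (meson degree_eq_zeroE)
  then have "a = 0" using assms(2) by (metis poly_diff poly_pCons poly_0 mult_zero_left add.right_neutral right_minus_eq)
  then show ?thesis using a by simp
qed

lemma pderiv_sum: "pderiv (sum f A) = (\<Sum>x\<in>A. pderiv (f x))"
  using higher_pderiv_sum[of 1 f A] by simp

definition Rp :: "'a::field_char_0 fps \<Rightarrow> nat \<Rightarrow> 'a poly" where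
  "Rp f m = (\<Sum>i\<le>m. monom (fps_nth f (m - i) / fact i) i)"

lemma pderiv_Rp: "pderiv (Rp f (Suc m)) = Rp f m"
proof -
  have "pderiv (Rp f (Suc m)) = (\<Sum>i\<le>Suc m. pderiv (monom (fps_nth f (Suc m - i) / fact i) i))"
    by (simp only: Rp_def pderiv_sum)
  also have "\<dots> = (\<Sum>i\<le>Suc m. monom (fps_nth f (Suc m - i) / fact i * of_nat i) (i - 1))"
    by (intro sum.cong refl) (simp add: pderiv_monom mult_ac)
  also have "\<dots> = (\<Sum>i\<le>m. monom (fps_nth f (m - i) / fact (Suc i) * of_nat (Suc i)) i)"
    by (subst sum.atMost_Suc_shift) simp
  also have "\<dots> = Rp f m"
    unfolding Rp_def by (intro sum.cong refl) (simp add: field_simps del: of_nat_Suc)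
  finally show ?thesis .
qed

lemma poly_Rp0: "poly (Rp f m) 0 = fps_nth f m"
proof -
  have "poly (Rp f m) 0 = (\<Sum>i\<le>m. if i = 0 then fps_nth f (m - i) / fact i else 0)"
    by (simp add: Rp_def poly_sum poly_monom zero_power)
  also have "\<dots> = fps_nth f m" by (simp add: sum.delta)
  finally show ?thesis .
qed

lemma appell_Bp:
  assumes ap: "appell A"
  shows "Bp A m = Rp (appell_f A) m"
proof (induction m)
  case 0
  have "A 0 = 1" using ap by (simp add: appell_def)
  then show ?case by (simp add: Bp_def Rp_def appell_f_def monom_0 one_pCons)
next
  case (Suc m)
  have d: "pderiv (A (Suc m)) = smult (of_nat (Suc m)) (A m)" using ap by (simp add: appell_def)
  have "pderiv (Bp A (Suc m)) = Bp A m"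
    by (simp add: Bp_def pderiv_smult d field_simps del: of_nat_Suc)
  then have "pderiv (Bp A (Suc m)) = pderiv (Rp (appell_f A) (Suc m))"
    using Suc pderiv_Rp by metis
  moreover have "poly (Bp A (Suc m)) 0 = poly (Rp (appell_f A) (Suc m)) 0"
    by (simp add: poly_Rp0 Bp_def appell_f_def field_simps)
  ultimately show ?case by (rule poly_eq_by_deriv)
qed

definition Ep :: "'a::field_char_0 poly fps" where
  "Ep = Abs_fps (\<lambda>m. monom (inverse (fact m)) m)"

lemma H_factor:
  assumes ap: "appell A"
  shows "Abs_fps (Bp A) = Ep * liftp (appell_f A)"
proof (rule fps_ext)
  fix m
  have "fps_nth (Ep * liftp (appell_f A)) m = (\<Sum>i=0..m. monom (inverse (fact i)) i * [:fps_nth (appell_f A) (m - i):])"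
    by (simp add: fps_mult_nth Ep_def liftp_def)
  also have "\<dots> = Rp (appell_f A) m"
    unfolding Rp_def atLeast0AtMost
    by (intro sum.cong refl) (simp add: monom_0[symmetric] mult_monom field_simps del: monom_0)
  finally show "fps_nth (Abs_fps (Bp A)) m = fps_nth (Ep * liftp (appell_f A)) m"
    using appell_Bp[OF ap] by simp
qed

lemma Ep_deriv: "fps_deriv (Ep :: 'a::field_char_0 poly fps) = fps_const [:0,1:] * Ep"
proof (rule fps_ext)
  fix m
  have "fps_nth (fps_deriv (Ep :: 'a poly fps)) m = of_nat (Suc m) * monom (inverse (fact (Suc m))) (Suc m)"
    by (simp add: Ep_def del: of_nat_Suc fact_Suc)
  also have "\<dots> = monom (of_nat (Suc m) * inverse (fact (Suc m))) (Suc m)"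
    by (simp add: of_nat_monom mult_monom del: of_nat_Suc fact_Suc)
  also have "(of_nat (Suc m) * inverse (fact (Suc m)) :: 'a) = inverse (fact m)"
    by (simp add: field_simps del: of_nat_Suc)
  also have "monom (inverse (fact m)) (Suc m) = fps_nth (fps_const [:0,1:] * (Ep :: 'a poly fps)) m"
    by (simp add: Ep_def monom_Suc)
  finally show "fps_nth (fps_deriv (Ep :: 'a poly fps)) m = fps_nth (fps_const [:0,1:] * Ep) m" .
qed

lemma appell_f0: "appell A \<Longrightarrow> fps_nth (appell_f A) 0 = 1"
  by (simp add: appell_f_def appell_def)

lemma f_log_deriv:
  fixes A :: "nat \<Rightarrow> 'a::field_char_0 poly"
  assumes ap: "appell A"
  shows "fps_deriv (appell_f A) = fps_deriv (fps_log (appell_f A)) * appell_f A"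
proof -
  define f where "f = appell_f A"
  have f0: "fps_nth f 0 = 1" using appell_f0[OF ap] by (simp add: f_def)
  have b0: "fps_nth (f - 1) 0 = 0" using f0 by simp
  have "fps_deriv (fps_log f) = (fps_deriv (fps_ln 1) oo (f - 1)) * fps_deriv (f - 1)"
    unfolding fps_log_def by (rule fps_compose_deriv[OF b0])
  also have "fps_deriv (fps_ln (1::'a)) = inverse (1 + fps_X)"
    by (simp add: fps_ln_deriv)
  also have "inverse (1 + fps_X) oo (f - 1) = inverse ((1 + fps_X) oo (f - 1))"
    by (rule fps_inverse_compose[OF b0]) simp
  also have "(1 + fps_X) oo (f - 1) = f"
    using b0 by (simp add: fps_compose_add_distrib)
  finally have "fps_deriv (fps_log f) = inverse f * fps_deriv f" by simp
  then have "fps_deriv (fps_log f) * f = fps_deriv f * (inverse f * f)" by (simp add: mult_ac)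
  also have "inverse f * f = 1" using f0 by (simp add: inverse_mult_eq_1)
  finally show ?thesis by (simp add: f_def)
qed

lemma H_deriv:
  fixes A :: "nat \<Rightarrow> 'a::field_char_0 poly" and c :: "nat \<Rightarrow> 'a"
  assumes ap: "appell A"
    and hc: "\<forall>k\<ge>1. fps_nth (fps_log (appell_f A)) k = c k / fact k"
  shows "fps_deriv (Abs_fps (Bp A)) = Abs_fps (\<lambda>i. pp c (Suc i)) * Abs_fps (Bp A)"
proof -
  define f where "f = appell_f A"
  define L where "L = fps_log f"
  have Hf: "Abs_fps (Bp A) = Ep * liftp f" using H_factor[OF ap] by (simp add: f_def)
  have fd: "fps_deriv f = fps_deriv L * f" using f_log_deriv[OF ap] by (simp add: f_def L_def)
  have "fps_deriv (Abs_fps (Bp A)) = fps_deriv Ep * liftp f + Ep * fps_deriv (liftp f)"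
    by (simp add: Hf)
  also have "fps_deriv (liftp f) = liftp (fps_deriv L) * liftp f"
    by (simp add: liftp_deriv[symmetric] fd liftp_mult)
  also have "fps_deriv Ep * liftp f + Ep * (liftp (fps_deriv L) * liftp f)
      = (fps_const [:0,1:] + liftp (fps_deriv L)) * (Ep * liftp f)"
    by (simp add: Ep_deriv algebra_simps)
  also have "fps_const [:0,1:] + liftp (fps_deriv L) = Abs_fps (\<lambda>i. pp c (Suc i))"
  proof (rule fps_ext)
    fix i
    have "fps_nth L (Suc i) = c (Suc i) / fact (Suc i)" using hc by (simp add: L_def f_def)
    then show "fps_nth (fps_const [:0,1:] + liftp (fps_deriv L)) i = fps_nth (Abs_fps (\<lambda>i. pp c (Suc i))) i"
      by (simp add: pp_def liftp_def del: of_nat_Suc fact_Suc)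
  qed
  finally show ?thesis by (simp add: Hf)
qed

lemma P_eq:
  fixes A :: "nat \<Rightarrow> 'a::field_char_0 poly" and c :: "nat \<Rightarrow> 'a"
  assumes ap: "appell A"
    and hc: "\<forall>k\<ge>1. fps_nth (fps_log (appell_f A)) k = c k / fact k"
    and k: "1 \<le> k"
  shows "(\<Sum>d<k. of_nat (k - d) * ginv (Bp A) d * Bp A (k - d)) = pp c k"
proof -
  define H where "H = Abs_fps (Bp A)"
  define G where "G = Abs_fps (ginv (Bp A))"
  define P where "P = Abs_fps (\<lambda>i. pp c (Suc i))"
  have B0: "Bp A 0 = 1" using ap by (simp add: Bp_def appell_def)
  have GH: "G * H = 1"
  proof (rule fps_ext)
    fix m
    show "fps_nth (G * H) m = fps_nth 1 m"
      using ginv_conv[of "Bp A" m, OF B0]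
      by (simp add: G_def H_def fps_mult_nth atLeast0AtMost)
  qed
  have "G * fps_deriv H = P * (G * H)" using H_deriv[OF ap hc] by (simp add: H_def P_def mult_ac)
  then have eq: "G * fps_deriv H = P" using GH by simp
  obtain k' where k': "k = Suc k'" using k by (cases k) auto
  have "fps_nth (G * fps_deriv H) k' = (\<Sum>i=0..k'. ginv (Bp A) i * (of_nat (k' - i + 1) * Bp A (k' - i + 1)))"
    by (simp add: fps_mult_nth G_def H_def)
  also have "\<dots> = (\<Sum>d<k. of_nat (k - d) * ginv (Bp A) d * Bp A (k - d))"
    unfolding k' atLeast0AtMost lessThan_Suc_atMost
    by (intro sum.cong refl) (auto simp: Suc_diff_le mult_ac)
  finally show ?thesis using eq k' by (simp add: P_def)
qed

lemma det_scale_cols: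
  fixes c :: "nat \<Rightarrow> 'b::comm_ring_1"
  shows "det (mat n n (\<lambda>(i,j). c j * M i j)) = (\<Prod>j<n. c j) * det (mat n n (\<lambda>(i,j). M i j))"
proof -
  have "det (mat n n (\<lambda>(i,j). c j * M i j)) =
      (\<Sum>p\<in>{p. p permutes {0..<n}}. signof p * (\<Prod>i=0..<n. c (p i) * M i (p i)))"
    by (subst det_def'[of _ n]) auto
  also have "\<dots> = (\<Sum>p\<in>{p. p permutes {0..<n}}. (\<Prod>j<n. c j) * (signof p * (\<Prod>i=0..<n. M i (p i))))"
  proof (intro sum.cong refl)
    fix p assume "p \<in> {p. p permutes {0..<n}}"
    then have p: "p permutes {0..<n}" by simp
    have "(\<Prod>i=0..<n. c (p i)) = (\<Prod>j=0..<n. c j)"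
      using prod.permute[OF p, of c] by (simp add: comp_def)
    then show "signof p * (\<Prod>i=0..<n. c (p i) * M i (p i)) = (\<Prod>j<n. c j) * (signof p * (\<Prod>i=0..<n. M i (p i)))"
      by (simp add: prod.distrib lessThan_atLeast0 mult_ac)
  qed
  also have "\<dots> = (\<Prod>j<n. c j) * det (mat n n (\<lambda>(i,j). M i j))"
    by (subst det_def'[of _ n]) (auto simp: sum_distrib_left)
  finally show ?thesis .
qed

lemma appell_hderiv:
  fixes A :: "nat \<Rightarrow> 'a::field_char_0 poly"
  assumes ap: "appell A"
  shows "(pderiv ^^ i) (A m) = (if i \<le> m then smult (fact m / fact (m - i)) (A (m - i)) else 0)"
proof (induction i)
  case 0 then show ?case by simp
next
  case (Suc i)
  have d: "\<And>n. n \<ge> 1 \<Longrightarrow> pderiv (A n) = smult (of_nat n) (A (n - 1))" using ap by (simp add: appell_def)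
  have A0: "A 0 = 1" using ap by (simp add: appell_def)
  show ?case
  proof (cases "Suc i \<le> m")
    case True
    have "(pderiv ^^ Suc i) (A m) = smult (fact m / fact (m - i)) (pderiv (A (m - i)))"
      using Suc True by (simp add: pderiv_smult)
    also have "\<dots> = smult (fact m / fact (m - i) * of_nat (m - i)) (A (m - Suc i))"
      using d[of "m - i"] True by simp
    also have "fact m / fact (m - i) * of_nat (m - i) = (fact m / fact (m - Suc i) :: 'a)"
    proof -
      obtain t where t: "m - i = Suc t" "m - Suc i = t" using True
        by (metis Suc_diff_Suc Suc_le_lessD diff_Suc_Suc)
      show ?thesis unfolding t by (simp add: field_simps del: of_nat_Suc)
    qed
    finally show ?thesis using True by simp
  next
    case False
    show ?thesis
    proof (cases "i = m")
      case True
      then show ?thesis using Suc by (simp add: A0 pderiv_smult)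
    next
      case False
      then show ?thesis using Suc \<open>\<not> Suc i \<le> m\<close> by simp
    qed
  qed
qed

lemma wronskian_JT:
  fixes A :: "nat \<Rightarrow> 'a::field_char_0 poly"
  assumes ap: "appell A"
  shows "wronskian (map A ns) = of_nat (\<Prod>j<length ns. fact (ns!j)) * JT (Bp A) ns"
proof -
  let ?r = "length ns"
  have ent: "(pderiv ^^ i) (A m) = of_nat (fact m) * hh (Bp A) m i" for i m
  proof (cases "i \<le> m")
    case True
    have "of_nat (fact m) * hh (Bp A) m i = smult (of_nat (fact m)) (smult (inverse (fact (m - i))) (A (m - i)))"
      using True by (simp only: hh_def Bp_def of_nat_mult_conv_smult if_True)
    also have "\<dots> = smult (fact m / fact (m - i)) (A (m - i))"
      by (simp add: divide_inverse)
    finally show ?thesis using True by (simp add: appell_hderiv[OF ap])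
  next
    case False
    then show ?thesis by (simp add: appell_hderiv[OF ap] hh_def)
  qed
  have "wronskian (map A ns) = det (mat ?r ?r (\<lambda>(i,j). of_nat (fact (ns!j)) * hh (Bp A) (ns!j) i))"
    unfolding wronskian_def
    by (intro arg_cong[of _ _ det] eq_matI) (auto simp: ent simp del: of_nat_fact)
  also have "\<dots> = (\<Prod>j<?r. of_nat (fact (ns!j))) * JT (Bp A) ns"
    unfolding JT_def by (subst det_scale_cols) simp
  finally show ?thesis by simp
qed

definition ffi :: "int \<Rightarrow> nat \<Rightarrow> int" where
  "ffi y i = (\<Prod>t<i. y - int t)"

definition VDM :: "int list \<Rightarrow> int" where
  "VDM xs = det (mat (length xs) (length xs) (\<lambda>(i,j). ffi (xs!j) i))"

definition vdm :: "int list \<Rightarrow> int" where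
  "vdm xs = (\<Prod>j<length xs. \<Prod>i<j. xs!j - xs!i)"

lemma ffi_Suc: "ffi y (Suc i) = ffi y i * (y - int i)"
  by (simp add: ffi_def)

lemma ffi_Suc': "ffi y (Suc i) = y * ffi (y - 1) i"
  unfolding ffi_def prod.lessThan_Suc_shift by (simp add: algebra_simps)

lemma vdm_Cons: "vdm (x # xs) = (\<Prod>j<length xs. xs!j - x) * vdm xs"
proof -
  have "vdm (x # xs) = (\<Prod>j<length xs. \<Prod>i<Suc j. (x#xs)!(Suc j) - (x#xs)!i)"
    unfolding vdm_def length_Cons prod.lessThan_Suc_shift by simp
  also have "\<dots> = (\<Prod>j<length xs. (xs!j - x) * (\<Prod>i<j. xs!j - xs!i))"
    by (intro prod.cong refl) (subst prod.lessThan_Suc_shift, simp)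
  finally show ?thesis by (simp add: prod.distrib vdm_def)
qed

lemma VDM_vdm: "VDM xs = vdm xs"
proof (induction xs)
  case Nil then show ?case by (simp add: VDM_def vdm_def)
next
  case (Cons x xs)
  let ?r = "length xs"
  define M where "M = mat (Suc ?r) (Suc ?r) (\<lambda>(i,j). ffi ((x#xs)!j) i)"
  define L where "L = mat (Suc ?r) (Suc ?r) (\<lambda>(i,i'). (if i' = i then 1 else 0) + (if Suc i' = i then - (x - int i') else 0) :: int)"
  have M: "M \<in> carrier_mat (Suc ?r) (Suc ?r)" by (simp add: M_def)
  have L: "L \<in> carrier_mat (Suc ?r) (Suc ?r)" by (simp add: L_def)
  have detL: "det L = 1"
  proof -
    have "det L = prod_list (diag_mat L)"
      by (rule det_lower_triangular[OF _ L]) (auto simp: L_def)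
    also have "diag_mat L = map (\<lambda>i. 1) [0..<Suc ?r]"
      unfolding diag_mat_def by (intro map_cong) (auto simp: L_def)
    finally show ?thesis by (simp add: map_replicate_const del: upt_Suc)
  qed
  have LM: "(L * M) $$ (i,j) = (if i = 0 then 1 else ((x#xs)!j - x) * ffi ((x#xs)!j) (i - 1))"
    if ij: "i < Suc ?r" "j < Suc ?r" for i j
  proof -
    have "(L * M) $$ (i,j) = (\<Sum>i'<Suc ?r. L $$ (i,i') * M $$ (i',j))"
      using ij L M by (simp add: times_mat_def scalar_prod_def lessThan_atLeast0)
    also have "\<dots> = (\<Sum>i'<Suc ?r. (if i' = i then M $$ (i',j) else 0))
        + (\<Sum>i'<Suc ?r. (if Suc i' = i then - (x - int i') * M $$ (i',j) else 0))"
      unfolding sum.distrib[symmetric]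
      by (intro sum.cong refl) (use ij in \<open>auto simp: L_def\<close>)
    also have "(\<Sum>i'<Suc ?r. (if i' = i then M $$ (i',j) else 0)) = M $$ (i,j)"
      using ij by (simp add: sum.delta)
    also have "(\<Sum>i'<Suc ?r. (if Suc i' = i then - (x - int i') * M $$ (i',j) else 0))
        = (if i = 0 then 0 else - (x - int (i - 1)) * M $$ (i - 1,j))"
    proof (cases i)
      case 0 then show ?thesis by simp
    next
      case (Suc i0)
      have "(\<Sum>i'<Suc ?r. (if Suc i' = i then - (x - int i') * M $$ (i',j) else 0))
          = (\<Sum>i'<Suc ?r. (if i' = i0 then - (x - int i') * M $$ (i',j) else 0))"
        using Suc by (intro sum.cong refl) auto
      also have "\<dots> = - (x - int i0) * M $$ (i0,j)" using ij Suc by (simp add: sum.delta)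
      finally show ?thesis using Suc by simp
    qed
    also have "M $$ (i,j) + (if i = 0 then 0 else - (x - int (i - 1)) * M $$ (i - 1,j))
        = (if i = 0 then 1 else ((x#xs)!j - x) * ffi ((x#xs)!j) (i - 1))"
    proof (cases i)
      case 0 then show ?thesis using ij by (simp add: M_def ffi_def)
    next
      case (Suc i')
      then show ?thesis using ij by (simp add: M_def ffi_Suc algebra_simps)
    qed
    finally show ?thesis .
  qed
  have "VDM (x # xs) = det M" by (simp add: VDM_def M_def)
  also have "\<dots> = det (L * M)" using det_mult[OF L M] detL by simp
  also have "\<dots> = (\<Sum>i<Suc ?r. (L * M) $$ (i,0) * cofactor (L * M) i 0)"
    by (rule laplace_expansion_column) (use L M in auto)
  also have "\<dots> = (\<Sum>i<Suc ?r. if i = 0 then cofactor (L * M) 0 0 else 0)"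
    by (intro sum.cong refl) (simp add: LM)
  also have "\<dots> = cofactor (L * M) 0 0" by (simp add: sum.delta)
  also have "\<dots> = det (mat ?r ?r (\<lambda>(i,j). (xs!j - x) * ffi (xs!j) i))"
    unfolding cofactor_def power_0 add_0 mult_1
  proof (intro arg_cong[of _ _ det] eq_matI)
    fix i j assume ij: "i < dim_row (mat ?r ?r (\<lambda>(i,j). (xs!j - x) * ffi (xs!j) i))"
      "j < dim_col (mat ?r ?r (\<lambda>(i,j). (xs!j - x) * ffi (xs!j) i))"
    have LMc: "dim_row (L * M) = Suc ?r" "dim_col (L * M) = Suc ?r" using L M by auto
    have "mat_delete (L * M) 0 0 $$ (i,j) = (L * M) $$ (Suc i, Suc j)"
      using ij by (simp only: mat_delete_def LMc) (simp del: index_mult_mat)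
    also have "\<dots> = (xs!j - x) * ffi (xs!j) i" using LM[of "Suc i" "Suc j"] ij by simp
    finally show "mat_delete (L * M) 0 0 $$ (i,j) = mat ?r ?r (\<lambda>(i,j). (xs!j - x) * ffi (xs!j) i) $$ (i,j)"
      using ij by simp
  qed (use L M in auto)
  also have "\<dots> = (\<Prod>j<?r. xs!j - x) * VDM xs"
    unfolding VDM_def by (subst det_scale_cols) simp
  finally show ?case using Cons by (simp add: vdm_Cons)
qed

lemma vdm_identity:
  fixes xs :: "int list"
  shows "(\<Sum>j<length xs. xs!j * vdm (xs[j := xs!j - 1])) = ((\<Sum>j<length xs. xs!j) - (\<Sum>i<length xs. int i)) * vdm xs"
proof -
  let ?r = "length xs"
  define M where "M = mat ?r ?r (\<lambda>(i,j). ffi (xs!j) i)"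
  have M: "M \<in> carrier_mat ?r ?r" by (simp add: M_def)
  have one: "xs!j * vdm (xs[j := xs!j - 1]) = (\<Sum>i<?r. (xs!j - int i) * M $$ (i,j) * cofactor M i j)"
    if j: "j < ?r" for j
  proof -
    have "xs!j * vdm (xs[j := xs!j - 1]) = xs!j * VDM (xs[j := xs!j - 1])" by (simp add: VDM_vdm)
    also have "\<dots> = xs!j * det (mat ?r ?r (\<lambda>(i,j'). if j' = j then ffi (xs!j - 1) i else M $$ (i,j')))"
      unfolding VDM_def using j by (intro arg_cong[of _ _ "\<lambda>t. _ * det t"] eq_matI) (auto simp: M_def nth_list_update)
    also have "\<dots> = xs!j * (\<Sum>i<?r. ffi (xs!j - 1) i * cofactor M i j)"
      by (simp add: det_replace_col[OF M j])
    also have "\<dots> = (\<Sum>i<?r. (xs!j - int i) * M $$ (i,j) * cofactor M i j)"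
      unfolding sum_distrib_left
    proof (intro sum.cong refl)
      fix i assume i: "i \<in> {..<?r}"
      have "xs!j * (ffi (xs!j - 1) i * cofactor M i j) = ffi (xs!j) (Suc i) * cofactor M i j"
        by (simp only: ffi_Suc' mult.assoc)
      also have "\<dots> = (xs!j - int i) * M $$ (i,j) * cofactor M i j"
        using i j by (simp only: ffi_Suc M_def index_mat(1) lessThan_iff split: prod.split) (simp add: mult_ac)
      finally show "xs!j * (ffi (xs!j - 1) i * cofactor M i j) = (xs!j - int i) * M $$ (i,j) * cofactor M i j" .
    qed
    finally show ?thesis .
  qed
  have "(\<Sum>j<?r. xs!j * vdm (xs[j := xs!j - 1])) = (\<Sum>j<?r. \<Sum>i<?r. (xs!j - int i) * M $$ (i,j) * cofactor M i j)"
    using one by simp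
  also have "\<dots> = (\<Sum>j<?r. \<Sum>i<?r. xs!j * (M $$ (i,j) * cofactor M i j)) - (\<Sum>j<?r. \<Sum>i<?r. int i * (M $$ (i,j) * cofactor M i j))"
    by (simp only: sum_subtractf[symmetric] left_diff_distrib mult.assoc)
  also have "(\<Sum>j<?r. \<Sum>i<?r. int i * (M $$ (i,j) * cofactor M i j)) = (\<Sum>i<?r. \<Sum>j<?r. int i * (M $$ (i,j) * cofactor M i j))"
    by (rule sum.swap)
  also have "(\<Sum>j<?r. \<Sum>i<?r. xs!j * (M $$ (i,j) * cofactor M i j)) - (\<Sum>i<?r. \<Sum>j<?r. int i * (M $$ (i,j) * cofactor M i j))
      = (\<Sum>j<?r. xs!j * (\<Sum>i<?r. M $$ (i,j) * cofactor M i j)) - (\<Sum>i<?r. int i * (\<Sum>j<?r. M $$ (i,j) * cofactor M i j))"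
    by (simp only: sum_distrib_left)
  also have "\<dots> = (\<Sum>j<?r. xs!j * det M) - (\<Sum>i<?r. int i * det M)"
  proof -
    have "(\<Sum>i<?r. M $$ (i,j) * cofactor M i j) = det M" if "j < ?r" for j
      using laplace_expansion_column[OF M that] by simp
    moreover have "(\<Sum>j<?r. M $$ (i,j) * cofactor M i j) = det M" if "i < ?r" for i
      using adj_row_sum[OF M that that] by simp
    ultimately show ?thesis by simp
  qed
  also have "det M = vdm xs" by (simp add: M_def VDM_vdm[symmetric] VDM_def)
  finally show ?thesis by (simp add: left_diff_distrib sum_distrib_right)
qed

definition SYTd :: "(nat \<times> nat) set \<Rightarrow> nat \<Rightarrow> ((nat \<times> nat) \<Rightarrow> nat) set" where
  "SYTd D n = {T. bij_betw T D {1..n} \<and> (\<forall>c. c \<notin> D \<longrightarrow> T c = 0) \<and>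
     (\<forall>i j. (i, Suc j) \<in> D \<longrightarrow> T (i, j) < T (i, Suc j)) \<and>
     (\<forall>i j. (Suc i, j) \<in> D \<longrightarrow> T (i, j) < T (Suc i, j))}"

lemma SYT_SYTd: "SYT la = SYTd (diagram la) (psize la)"
  by (simp add: SYT_def SYTd_def)

definition corners :: "(nat \<times> nat) set \<Rightarrow> (nat \<times> nat) set" where
  "corners D = {c \<in> D. (fst c, Suc (snd c)) \<notin> D \<and> (Suc (fst c), snd c) \<notin> D}"

lemma SYTd_zero: "T \<in> SYTd D n \<Longrightarrow> x \<notin> D \<Longrightarrow> T x = 0"
  unfolding SYTd_def by blast

lemma SYTd_le:
  assumes T: "T \<in> SYTd D n" shows "T x \<le> n"
proof (cases "x \<in> D")
  case True
  then have "T x \<in> T ` D" by simp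
  then show ?thesis using T by (auto simp: SYTd_def bij_betw_def)
next
  case False
  then have "T x = 0" using T unfolding SYTd_def by blast
  then show ?thesis by simp
qed

lemma SYTd_finite:
  assumes D: "finite D"
  shows "finite (SYTd D n)"
proof -
  have "SYTd D n \<subseteq> {f. \<forall>x. (x \<in> D \<longrightarrow> f x \<in> {0..n}) \<and> (x \<notin> D \<longrightarrow> f x = 0)}"
    by (auto simp: SYTd_def bij_betw_def)
  then show ?thesis using finite_set_of_finite_funs[OF D, of "{0..n}" 0] finite_subset by blast
qed

lemma SYTd_slice:
  assumes n: "n \<ge> 1" and c: "c \<in> corners D"
  shows "{T \<in> SYTd D n. T c = n} = (\<lambda>T. T(c := n)) ` SYTd (D - {c}) (n - 1)"
proof
  have cD: "c \<in> D" using c by (simp add: corners_def)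
  show "{T \<in> SYTd D n. T c = n} \<subseteq> (\<lambda>T. T(c := n)) ` SYTd (D - {c}) (n - 1)"
  proof
    fix T assume T: "T \<in> {T \<in> SYTd D n. T c = n}"
    then have Tc: "T c = n" and TS: "T \<in> SYTd D n" by auto
    have bij: "bij_betw T D {1..n}" using TS by (simp add: SYTd_def)
    define T' where "T' = T(c := 0)"
    have eq: "T = T'(c := n)" using Tc by (auto simp: T'_def fun_eq_iff)
    have "T' \<in> SYTd (D - {c}) (n - 1)"
      unfolding SYTd_def
    proof (intro CollectI conjI allI impI)
      have inj: "inj_on T (D - {c})" using bij by (auto simp: bij_betw_def intro: inj_on_subset)
      have "T ` (D - {c}) = T ` D - T ` {c}"
        using bij cD by (intro inj_on_image_set_diff) (auto simp: bij_betw_def)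
      also have "\<dots> = {1..n - 1}" using bij Tc n by (auto simp: bij_betw_def)
      finally have "bij_betw T (D - {c}) {1..n - 1}" using inj by (simp add: bij_betw_def)
      then show "bij_betw T' (D - {c}) {1..n - 1}"
        by (rule bij_betw_cong[THEN iffD1, rotated]) (auto simp: T'_def)
    next
      fix x assume "x \<notin> D - {c}"
      then show "T' x = 0" using SYTd_zero[OF TS, of x] by (auto simp: T'_def)
    next
      fix i j assume ij: "(i, Suc j) \<in> D - {c}"
      have lt: "T (i, j) < T (i, Suc j)" using TS ij by (auto simp: SYTd_def)
      have "(i, j) \<noteq> c" using lt Tc SYTd_le[OF TS, of "(i, Suc j)"] by auto
      then show "T' (i, j) < T' (i, Suc j)" using lt ij by (auto simp: T'_def)
    next
      fix i j assume ij: "(Suc i, j) \<in> D - {c}"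
      have lt: "T (i, j) < T (Suc i, j)" using TS ij by (auto simp: SYTd_def)
      have "(i, j) \<noteq> c" using lt Tc SYTd_le[OF TS, of "(Suc i, j)"] by auto
      then show "T' (i, j) < T' (Suc i, j)" using lt ij by (auto simp: T'_def)
    qed
    then show "T \<in> (\<lambda>T. T(c := n)) ` SYTd (D - {c}) (n - 1)" using eq by blast
  qed
  show "(\<lambda>T. T(c := n)) ` SYTd (D - {c}) (n - 1) \<subseteq> {T \<in> SYTd D n. T c = n}"
  proof
    fix T assume "T \<in> (\<lambda>T. T(c := n)) ` SYTd (D - {c}) (n - 1)"
    then obtain T' where T': "T' \<in> SYTd (D - {c}) (n - 1)" and T: "T = T'(c := n)" by auto
    have bij': "bij_betw T' (D - {c}) {1..n - 1}" using T' by (simp add: SYTd_def)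
    have le': "\<And>x. T' x \<le> n - 1" using SYTd_le[OF T'] by simp
    have "T \<in> SYTd D n"
      unfolding SYTd_def
    proof (intro CollectI conjI allI impI)
      have Dc: "D = insert c (D - {c})" using cD by auto
      have im: "T ` (D - {c}) = {1..n - 1}"
        using bij' by (auto simp: bij_betw_def T image_def)
      have injT: "inj_on T (D - {c})" using bij'
        by (auto simp: bij_betw_def T inj_on_def)
      have dd: "D - {c} - {c} = D - {c}" by auto
      have Tcn: "T c = n" by (simp add: T)
      have notin: "T c \<notin> T ` (D - {c} - {c})" unfolding dd im Tcn using n by simp
      have "inj_on T (insert c (D - {c}))"
        by (simp only: inj_on_insert) (use injT notin in blast)
      moreover have "T ` insert c (D - {c}) = {1..n}"
        by (simp only: image_insert im Tcn) (use n in auto)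
      ultimately show "bij_betw T D {1..n}" using Dc by (metis bij_betw_def)
    next
      fix x assume "x \<notin> D"
      then show "T x = 0" using SYTd_zero[OF T', of x] cD by (auto simp: T)
    next
      fix i j assume ij: "(i, Suc j) \<in> D"
      show "T (i, j) < T (i, Suc j)"
      proof (cases "(i, Suc j) = c")
        case True
        then have "(i, j) \<noteq> c" by auto
        then show ?thesis using True le'[of "(i,j)"] n by (auto simp: T)
      next
        case False
        have "(i, j) \<noteq> c" using c ij by (auto simp: corners_def)
        then show ?thesis using False ij T' by (auto simp: T SYTd_def)
      qed
    next
      fix i j assume ij: "(Suc i, j) \<in> D"
      show "T (i, j) < T (Suc i, j)"
      proof (cases "(Suc i, j) = c")
        case True
        then have "(i, j) \<noteq> c" by auto
        then show ?thesis using True le'[of "(i,j)"] n by (auto simp: T)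
      next
        case False
        have "(i, j) \<noteq> c" using c ij by (auto simp: corners_def)
        then show ?thesis using False ij T' by (auto simp: T SYTd_def)
      qed
    qed
    then show "T \<in> {T \<in> SYTd D n. T c = n}" by (simp add: T)
  qed
qed

lemma SYTd_rec:
  assumes D: "finite D" and n: "n \<ge> 1"
  shows "card (SYTd D n) = (\<Sum>c\<in>corners D. card (SYTd (D - {c}) (n - 1)))"
proof -
  have cov: "SYTd D n = (\<Union>c\<in>corners D. {T \<in> SYTd D n. T c = n})"
  proof
    show "SYTd D n \<subseteq> (\<Union>c\<in>corners D. {T \<in> SYTd D n. T c = n})"
    proof
      fix T assume T: "T \<in> SYTd D n"
      then have bij: "bij_betw T D {1..n}" by (simp add: SYTd_def)
      have "n \<in> T ` D" using bij n by (auto simp: bij_betw_def)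
      then obtain c where cD: "c \<in> D" and Tc: "T c = n" by auto
      obtain i j where c: "c = (i, j)" by (cases c)
      have "(i, Suc j) \<notin> D"
      proof
        assume "(i, Suc j) \<in> D"
        then have "T (i, j) < T (i, Suc j)" using T by (simp add: SYTd_def)
        then show False using Tc c SYTd_le[OF T, of "(i, Suc j)"] by simp
      qed
      moreover have "(Suc i, j) \<notin> D"
      proof
        assume "(Suc i, j) \<in> D"
        then have "T (i, j) < T (Suc i, j)" using T by (simp add: SYTd_def)
        then show False using Tc c SYTd_le[OF T, of "(Suc i, j)"] by simp
      qed
      ultimately have "c \<in> corners D" using cD c by (simp add: corners_def)
      then show "T \<in> (\<Union>c\<in>corners D. {T \<in> SYTd D n. T c = n})" using T Tc by blast
    qed
  qed auto
  have fin_c: "finite (corners D)" using D by (auto simp: corners_def)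
  have "card (SYTd D n) = (\<Sum>c\<in>corners D. card {T \<in> SYTd D n. T c = n})"
    apply (subst cov)
    apply (rule card_UN_disjoint[OF fin_c])
    subgoal using SYTd_finite[OF D] by auto
    subgoal
    proof (intro ballI impI)
      fix c c' assume c: "c \<in> corners D" and c': "c' \<in> corners D" and ne: "c \<noteq> c'"
      show "{T \<in> SYTd D n. T c = n} \<inter> {T \<in> SYTd D n. T c' = n} = {}"
      proof (rule ccontr)
        assume "{T \<in> SYTd D n. T c = n} \<inter> {T \<in> SYTd D n. T c' = n} \<noteq> {}"
        then obtain T where T: "T \<in> SYTd D n" "T c = n" "T c' = n" by auto
        have "inj_on T D" using T by (simp add: SYTd_def bij_betw_def)
        then show False using T c c' ne by (auto simp: corners_def inj_on_def)
      qed
    qed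
    done
  also have "\<dots> = (\<Sum>c\<in>corners D. card (SYTd (D - {c}) (n - 1)))"
  proof (intro sum.cong refl)
    fix c assume c: "c \<in> corners D"
    have "inj_on (\<lambda>T. T(c := n)) (SYTd (D - {c}) (n - 1))"
    proof (rule inj_onI)
      fix T1 T2 assume T1: "T1 \<in> SYTd (D - {c}) (n - 1)" and T2: "T2 \<in> SYTd (D - {c}) (n - 1)"
        and eq: "T1(c := n) = T2(c := n)"
      have "T1 c = 0" "T2 c = 0" using SYTd_zero[OF T1, of c] SYTd_zero[OF T2, of c] by auto
      then show "T1 = T2" using eq by (metis fun_upd_triv fun_upd_upd)
    qed
    then show "card {T \<in> SYTd D n. T c = n} = card (SYTd (D - {c}) (n - 1))"
      by (simp add: SYTd_slice[OF n c] card_image)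
  qed
  finally show ?thesis .
qed

definition rf :: "nat list \<Rightarrow> nat \<Rightarrow> nat" where
  "rf la i = (if i < length la then la!i else 0)"

lemma diagram_rf: "diagram la = {(i,j). j < rf la i}"
  by (auto simp: diagram_def rf_def split: if_splits)

lemma psize_sum: "psize la = (\<Sum>i<length la. la!i)"
  by (simp add: psize_def sum_list_sum_nth atLeast0LessThan)

lemma sp_length[simp]: "length (shifted_parts la) = length la"
  by (simp add: shifted_parts_def)

lemma sp_nth: "j < length la \<Longrightarrow> shifted_parts la ! j = la ! (length la - 1 - j) + j"
  by (simp add: shifted_parts_def)

abbreviation wdec :: "nat list \<Rightarrow> bool" where "wdec la \<equiv> sorted_wrt (\<ge>) la"

lemma wdec_nth:
  assumes "wdec la" "i \<le> i'" "i' < length la" shows "la!i' \<le> la!i"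
proof (cases "i = i'")
  case False
  then have "i < i'" using assms by simp
  from sorted_wrt_nth_less[OF assms(1) this assms(3)] show ?thesis by simp
qed simp

lemma sp_strict:
  assumes "wdec la" "j < j'" "j' < length la"
  shows "shifted_parts la ! j < shifted_parts la ! j'"
proof -
  have "la ! (length la - 1 - j) \<le> la ! (length la - 1 - j')"
    using assms by (intro wdec_nth) auto
  then show ?thesis using assms by (simp add: sp_nth)
qed

lemma sp_update:
  assumes "R < length la"
  shows "shifted_parts (la[R := v]) = (shifted_parts la)[length la - 1 - R := v + (length la - 1 - R)]"
  by (rule nth_equalityI) (use assms in \<open>auto simp: sp_nth nth_list_update\<close>)

lemma vdm_dup:
  assumes "a < length xs" "b < length xs" "a \<noteq> b" "xs!a = xs!b"
  shows "vdm xs = 0"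
proof -
  have main: "vdm xs = 0" if ab: "a < b" "b < length xs" "xs!a = xs!b" for a b
  proof -
    have "\<exists>i\<in>{..<b}. xs!b - xs!i = 0" using ab by (intro bexI[of _ a]) auto
    then have "(\<Prod>i<b. xs!b - xs!i) = 0" by (intro prod_zero) auto
    then have "\<exists>j\<in>{..<length xs}. (\<Prod>i<j. xs!j - xs!i) = 0" using ab by auto
    then show ?thesis unfolding vdm_def by (intro prod_zero) auto
  qed
  show ?thesis
  proof (cases "a < b")
    case True then show ?thesis using main assms by blast
  next
    case False then show ?thesis using main[of b a] assms by auto
  qed
qed

lemma prod_diff_fact: "(\<Prod>i<j. int j - int i) = fact j"
proof -
  have "(\<Prod>i<j. int j - int i) = (\<Prod>i<j. int (j - i))" by (intro prod.cong refl) auto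
  also have "\<dots> = int (\<Prod>i<j. j - i)" by simp
  also have "(\<Prod>i<j. j - i) = (\<Prod>t\<in>{1..j}. t)"
    by (rule prod.reindex_bij_witness[where i="\<lambda>t. j - t" and j="\<lambda>i. j - i"]) auto
  also have "\<dots> = fact j" by (simp add: fact_prod)
  finally show ?thesis by simp
qed

lemma vdm_range: "vdm (map int [0..<r]) = (\<Prod>j<r. fact j)"
  unfolding vdm_def by (simp add: prod_diff_fact)

lemma SYTd_empty: "SYTd {} 0 = {\<lambda>_. 0}"
  by (auto simp: SYTd_def bij_betw_def)

lemma corners_diagram:
  "corners (diagram la) = (\<lambda>R. (R, la!R - 1)) ` {R. R < length la \<and> rf la (Suc R) < la!R}"
proof
  show "corners (diagram la) \<subseteq> (\<lambda>R. (R, la!R - 1)) ` {R. R < length la \<and> rf la (Suc R) < la!R}"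
  proof
    fix c assume c: "c \<in> corners (diagram la)"
    obtain i j where cij: "c = (i, j)" by (cases c)
    have h1: "j < rf la i" "\<not> Suc j < rf la i" "\<not> j < rf la (Suc i)"
      using c cij by (auto simp: corners_def diagram_rf)
    then have "i < length la" by (auto simp: rf_def split: if_splits)
    then have "j = la!i - 1" "rf la (Suc i) < la!i" using h1 by (auto simp: rf_def)
    then show "c \<in> (\<lambda>R. (R, la!R - 1)) ` {R. R < length la \<and> rf la (Suc R) < la!R}"
      using cij \<open>i < length la\<close> by auto
  qed
  show "(\<lambda>R. (R, la!R - 1)) ` {R. R < length la \<and> rf la (Suc R) < la!R} \<subseteq> corners (diagram la)"
    by (auto simp: corners_def diagram_rf rf_def)
qed

lemma F_formula:
  assumes "wdec la"
  shows "int (F la) * (\<Prod>j<length la. fact (shifted_parts la ! j)) = fact (psize la) * vdm (map int (shifted_parts la))"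
  using assms
proof (induction "psize la" arbitrary: la)
  case 0
  let ?r = "length la"
  have z: "\<And>i. i < ?r \<Longrightarrow> la!i = 0" using 0(1) by (simp add: psize_sum)
  have D: "diagram la = {}" using z by (auto simp: diagram_def)
  have F1: "F la = 1" by (simp add: num_SYT_def SYT_SYTd D 0(1)[symmetric] SYTd_empty)
  have sp: "shifted_parts la = [0..<?r]" by (rule nth_equalityI) (auto simp: sp_nth z)
  show ?case using F1 sp 0(1)[symmetric] by (simp add: vdm_range)
next
  case (Suc N)
  let ?r = "length la"
  define s where "s = shifted_parts la"
  define D where "D = diagram la"
  define CR where "CR = {R. R < ?r \<and> rf la (Suc R) < la!R}"
  define mu where "mu R = la[R := la!R - 1]" for R
  define Pr where "Pr xs = (\<Prod>j<?r. fact (xs ! j) :: int)" for xs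
  have slen: "length s = ?r" by (simp add: s_def)
  have finD: "finite D"
  proof -
    have "D \<subseteq> {..<?r} \<times> {..<Suc (psize la)}"
    proof
      fix x assume "x \<in> D"
      then obtain i j where x: "x = (i,j)" "i < ?r" "j < la!i" by (auto simp: D_def diagram_def)
      have "la!i \<le> psize la" using x(2) unfolding psize_def by (rule elem_le_sum_list)
      then show "x \<in> {..<?r} \<times> {..<Suc (psize la)}" using x by auto
    qed
    then show ?thesis by (rule finite_subset) auto
  qed
  have cornersD: "corners D = (\<lambda>R. (R, la!R - 1)) ` CR" by (simp add: D_def CR_def corners_diagram)
  have injc: "inj_on (\<lambda>R. (R, la!R - 1)) CR" by (auto simp: inj_on_def)
  have muR: "diagram (mu R) = D - {(R, la!R - 1)}" "psize (mu R) = N" "wdec (mu R)"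
    "shifted_parts (mu R) = s[?r - 1 - R := s!(?r - 1 - R) - 1]" "la!R \<ge> 1"
    if R: "R \<in> CR" for R
  proof -
    have Rr: "R < ?r" and lt: "rf la (Suc R) < la!R" using R by (auto simp: CR_def)
    then show pos: "la!R \<ge> 1" by simp
    show "diagram (mu R) = D - {(R, la!R - 1)}"
      unfolding mu_def D_def diagram_def using Rr pos by (auto simp: nth_list_update split: if_splits)
    have "psize (mu R) = (\<Sum>i<?r. la[R := la!R - 1] ! i)" by (simp add: psize_sum mu_def)
    also have "\<dots> = (\<Sum>i<?r. la!i) - 1"
    proof -
      have "(\<Sum>i<?r. la!i) = (\<Sum>i<?r. la[R := la!R - 1] ! i) + 1"
      proof -
        have "(\<Sum>i<?r. la!i) = (\<Sum>i<?r. la[R := la!R - 1] ! i + (if i = R then 1 else 0))"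
          using pos by (intro sum.cong refl) (auto simp: nth_list_update)
        also have "\<dots> = (\<Sum>i<?r. la[R := la!R - 1] ! i) + 1"
          using Rr by (simp add: sum.distrib)
        finally show ?thesis .
      qed
      then show ?thesis by simp
    qed
    also have "\<dots> = N" using Suc(2) by (simp add: psize_sum)
    finally show "psize (mu R) = N" .
    show "wdec (mu R)"
      unfolding sorted_wrt_iff_nth_less
    proof (intro allI impI)
      fix i j assume ij: "i < j" "j < length (mu R)"
      have w: "la!j \<le> la!i" using Suc(3) ij by (intro wdec_nth) (auto simp: mu_def)
      show "mu R ! j \<le> mu R ! i"
      proof (cases "j = R")
        case True then show ?thesis using w ij by (auto simp: mu_def nth_list_update)
      next
        case False
        show ?thesis
        proof (cases "i = R")
          case True
          have "la!j \<le> la!(Suc R)" using Suc(3) ij True by (intro wdec_nth) (auto simp: mu_def)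
          moreover have "la!(Suc R) < la!R" using lt ij True by (auto simp: rf_def mu_def)
          ultimately show ?thesis using True False ij by (auto simp: mu_def nth_list_update)
        next
          case False
          then show ?thesis using \<open>j \<noteq> R\<close> w ij by (auto simp: mu_def nth_list_update)
        qed
      qed
    qed
    show "shifted_parts (mu R) = s[?r - 1 - R := s!(?r - 1 - R) - 1]"
      using Rr pos by (simp add: mu_def sp_update s_def sp_nth)
  qed
  have step: "int (F la) * Pr s = (\<Sum>R\<in>CR. int (F (mu R)) * Pr s)"
  proof -
    have "F la = card (SYTd D (Suc N))" by (simp add: num_SYT_def SYT_SYTd D_def Suc(2))
    also have "\<dots> = (\<Sum>c\<in>corners D. card (SYTd (D - {c}) N))" using SYTd_rec[OF finD] by simp
    also have "\<dots> = (\<Sum>R\<in>CR. card (SYTd (D - {(R, la!R - 1)}) N))"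
      unfolding cornersD by (simp only: sum.reindex[OF injc] comp_def)
    also have "\<dots> = (\<Sum>R\<in>CR. F (mu R))"
      by (intro sum.cong refl) (simp add: num_SYT_def SYT_SYTd muR)
    finally show ?thesis by (simp add: sum_distrib_right)
  qed
  define g where "g j = int (s!j) * vdm ((map int s)[j := int (s!j) - 1])" for j
  have termR: "int (F (mu R)) * Pr s = fact N * g (?r - 1 - R)" if R: "R \<in> CR" for R
  proof -
    let ?j = "?r - 1 - R"
    have Rr: "R < ?r" using R by (simp add: CR_def)
    have j: "?j < ?r" using Rr by simp
    have sj: "s!?j \<ge> 1" using muR(5)[OF R] Rr by (simp add: s_def sp_nth)
    have IH: "int (F (mu R)) * Pr (s[?j := s!?j - 1]) = fact N * vdm (map int (s[?j := s!?j - 1]))"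
      using Suc(1)[of "mu R"] muR[OF R] by (simp add: Pr_def mu_def)
    have Prs: "Pr s = int (s!?j) * Pr (s[?j := s!?j - 1])"
    proof -
      have "Pr s = (\<Prod>j'<?r. (if j' = ?j then int (s!?j) else 1) * fact (s[?j := s!?j - 1] ! j'))"
      proof (unfold Pr_def, intro prod.cong refl)
        fix j' assume "j' \<in> {..<?r}"
        show "fact (s ! j') = (if j' = ?j then int (s!?j) else 1) * fact (s[?j := s!?j - 1] ! j')"
        proof (cases "j' = ?j")
          case True
          obtain t where t: "s!?j = Suc t" using sj by (cases "s!?j") auto
          have "fact (s ! ?j) = (int (s!?j) * fact (s!?j - 1) :: int)"
            unfolding t by (simp del: of_nat_Suc)
          then show ?thesis using True j slen by simp
        next
          case False then show ?thesis by simp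
        qed
      qed
      also have "\<dots> = int (s!?j) * Pr (s[?j := s!?j - 1])"
        using j by (simp add: prod.distrib Pr_def prod.delta)
      finally show ?thesis .
    qed
    have "map int (s[?j := s!?j - 1]) = (map int s)[?j := int (s!?j) - 1]"
      using sj by (simp add: map_update of_nat_diff)
    then show ?thesis using IH Prs by (simp add: g_def mult_ac)
  qed
  have "(\<Sum>R\<in>CR. int (F (mu R)) * Pr s) = fact N * (\<Sum>R\<in>CR. g (?r - 1 - R))"
    using termR by (simp add: sum_distrib_left)
  also have "(\<Sum>R\<in>CR. g (?r - 1 - R)) = (\<Sum>j\<in>(\<lambda>R. ?r - 1 - R) ` CR. g j)"
  proof -
    have "inj_on (\<lambda>R. ?r - 1 - R) CR" by (auto simp: inj_on_def CR_def)
    then show ?thesis by (simp only: sum.reindex comp_def)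
  qed
  also have "\<dots> = (\<Sum>j<?r. g j)"
  proof (rule sum.mono_neutral_left)
    show "(\<lambda>R. ?r - 1 - R) ` CR \<subseteq> {..<?r}" by (auto simp: CR_def)
    show "\<forall>j\<in>{..<?r} - (\<lambda>R. ?r - 1 - R) ` CR. g j = 0"
    proof
      fix j assume "j \<in> {..<?r} - (\<lambda>R. ?r - 1 - R) ` CR"
      then have j: "j < ?r" and nj: "j \<notin> (\<lambda>R. ?r - 1 - R) ` CR" by auto
      define R where "R = ?r - 1 - j"
      have jR: "j = ?r - 1 - R" using j by (simp add: R_def)
      have Rr: "R < ?r" using j by (simp add: R_def)
      have notCR: "R \<notin> CR" using nj jR by auto
      then have ge: "la!R \<le> rf la (Suc R)" using Rr by (auto simp: CR_def)
      show "g j = 0"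
      proof (cases "Suc R < ?r")
        case True
        have "la!(Suc R) \<le> la!R" using Suc(3) True by (intro wdec_nth) auto
        then have eq: "la!(Suc R) = la!R" using ge True by (simp add: rf_def)
        have j1: "j \<ge> 1" using True jR by simp
        have "s!(j - 1) = s!j - 1"
          using j j1 eq jR by (simp add: s_def sp_nth Suc_diff_Suc)
        moreover have "s!j \<ge> 1" using j j1 by (simp add: s_def sp_nth)
        ultimately have "((map int s)[j := int (s!j) - 1]) ! (j - 1) = ((map int s)[j := int (s!j) - 1]) ! j"
          using j j1 slen by (simp add: nth_list_update of_nat_diff)
        then have "vdm ((map int s)[j := int (s!j) - 1]) = 0"
          using j j1 slen by (intro vdm_dup[of "j - 1" _ j]) auto
        then show ?thesis by (simp add: g_def)
      next
        case False
        then have "la!R = 0" using ge by (simp add: rf_def)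
        moreover have "j = 0" using False jR Rr by simp
        moreover have "R = ?r - 1" using False Rr by simp
        ultimately have "s!j = 0" using j by (simp add: s_def sp_nth)
        then show ?thesis by (simp add: g_def)
      qed
    qed
  qed simp
  also have "(\<Sum>j<?r. g j) = ((\<Sum>j<?r. int (s!j)) - (\<Sum>i<?r. int i)) * vdm (map int s)"
    using vdm_identity[of "map int s"] slen by (simp add: g_def)
  also have "(\<Sum>j<?r. int (s!j)) - (\<Sum>i<?r. int i) = int (Suc N)"
  proof -
    have "(\<Sum>j<?r. int (s!j)) = (\<Sum>j<?r. int (la!(?r - 1 - j))) + (\<Sum>i<?r. int i)"
      by (simp add: s_def sp_nth sum.distrib)
    also have "(\<Sum>j<?r. int (la!(?r - 1 - j))) = (\<Sum>j<?r. int (la!j))"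
      using sum.nat_diff_reindex[of "\<lambda>j. int (la!j)" ?r] by simp
    also have "\<dots> = int (Suc N)" using Suc(2) by (simp add: psize_sum)
    finally show ?thesis by simp
  qed
  finally have "int (F la) * Pr s = fact (Suc N) * vdm (map int s)"
    using step by (simp add: algebra_simps)
  then show ?case using Suc(2) by (simp add: Pr_def s_def)
qed

lemma MN_B:
  fixes A :: "nat \<Rightarrow> 'a::field_char_0 poly" and c :: "nat \<Rightarrow> 'a"
  assumes ap: "appell A"
    and hc: "\<forall>k\<ge>1. fps_nth (fps_log (appell_f A)) k = c k / fact k"
    and k: "1 \<le> k" and pre: "\<And>j. j < k \<Longrightarrow> ns ! j = j" and kr: "k \<le> length ns"
  shows "(\<Sum>j<length ns. JT (Bp A) (ns[j := ns!j + k])) = pp c k * JT (Bp A) ns"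
proof -
  have B0: "Bp A 0 = 1" using ap by (simp add: Bp_def appell_def)
  have "(\<Sum>j<length ns. JT (Bp A) (ns[j := ns!j + k])) =
      (\<Sum>d<k. of_nat (k - d) * ginv (Bp A) d * Bp A (k - d)) * JT (Bp A) ns"
    by (rule MN_core[OF ginv_conv[of "Bp A", OF B0] pre kr k])
  also have "(\<Sum>d<k. of_nat (k - d) * ginv (Bp A) d * Bp A (k - d)) = pp c k"
    by (rule P_eq[OF ap hc k])
  finally show ?thesis .
qed

lemma vandermonde_vdm: "vandermonde ns = vdm (map int ns)"
  by (simp add: vandermonde_def vdm_def)

lemma vdm_pos:
  assumes "wdec la"
  shows "vdm (map int (shifted_parts la)) > 0"
  unfolding vdm_def
  using sp_strict[OF assms] by (auto intro!: prod_pos)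

lemma FA_JT:
  fixes A :: "nat \<Rightarrow> 'a::field_char_0 poly"
  assumes ap: "appell A" and w: "wdec la"
  shows "smult (of_nat (F la)) (appell_schur A la) = smult (fact (psize la)) (JT (Bp A) (shifted_parts la))"
proof -
  let ?s = "shifted_parts la"
  let ?P = "(\<Prod>j<length la. fact (?s ! j)) :: nat"
  let ?V = "vdm (map int ?s)"
  have V0: "?V \<noteq> 0" using vdm_pos[OF w] by simp
  have FF: "int (F la) * int ?P = fact (psize la) * ?V"
    using F_formula[OF w] by (simp add: of_nat_prod)
  have "(of_int (int (F la) * int ?P) :: 'a) = of_int (fact (psize la) * ?V)"
    using FF by simp
  then have FF': "(of_nat (F la) :: 'a) * of_nat ?P = fact (psize la) * of_int ?V"
    by (simp only: of_int_mult of_int_of_nat_eq of_int_fact)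
  have "smult (of_nat (F la)) (appell_schur A la)
      = smult (of_nat (F la) / of_int ?V) (of_nat ?P * JT (Bp A) ?s)"
    by (simp add: appell_schur_def wronskian_JT[OF ap] vandermonde_vdm)
  also have "of_nat ?P * JT (Bp A) ?s = smult (of_nat ?P) (JT (Bp A) ?s)"
    by (rule of_nat_mult_conv_smult)
  also have "smult (of_nat (F la) / of_int ?V) (smult (of_nat ?P) (JT (Bp A) ?s))
      = smult (of_nat (F la) * of_nat ?P / of_int ?V) (JT (Bp A) ?s)"
    by (simp add: field_simps)
  also have "(of_nat (F la) * of_nat ?P / of_int ?V :: 'a) = fact (psize la)"
    using FF' V0 by (simp add: field_simps)
  finally show ?thesis .
qed

lemma sp_snoc0: "shifted_parts (la @ [0]) = 0 # map Suc (shifted_parts la)"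
  by (rule nth_equalityI) (auto simp: sp_nth nth_append nth_Cons split: nat.split)

lemma JT_sp_pad:
  assumes ap: "appell A"
  shows "JT (Bp A) (shifted_parts (la @ replicate m 0)) = JT (Bp A) (shifted_parts la)"
proof (induction m)
  case 0 then show ?case by simp
next
  case (Suc m)
  have B0: "Bp A 0 = 1" using ap by (simp add: Bp_def appell_def)
  have "la @ replicate (Suc m) 0 = (la @ replicate m 0) @ [0]"
    by (simp add: replicate_append_same[symmetric])
  then have "shifted_parts (la @ replicate (Suc m) 0) = 0 # map Suc (shifted_parts (la @ replicate m 0))"
    by (simp only: sp_snoc0)
  then have "JT (Bp A) (shifted_parts (la @ replicate (Suc m) 0)) = JT (Bp A) (shifted_parts (la @ replicate m 0))"
    by (simp only: JT_pad[of "Bp A", OF B0])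
  then show ?case using Suc by simp
qed

definition skf :: "(nat \<Rightarrow> nat) \<Rightarrow> (nat \<Rightarrow> nat) \<Rightarrow> (nat \<times> nat) set" where
  "skf l g = {(i,j). l i \<le> j \<and> j < g i}"

lemma no2x2_iff:
  assumes antg: "\<And>i. g (Suc i) \<le> g i" and antl: "\<And>i. l (Suc i) \<le> l i"
  shows "no_2x2 (skf l g) \<longleftrightarrow> (\<forall>i. g (Suc i) \<le> Suc (l i))"
proof
  assume n: "no_2x2 (skf l g)"
  show "\<forall>i. g (Suc i) \<le> Suc (l i)"
  proof (rule ccontr)
    assume "\<not> (\<forall>i. g (Suc i) \<le> Suc (l i))"
    then obtain i where "\<not> g (Suc i) \<le> Suc (l i)" by blast
    then have i: "Suc (Suc (l i)) \<le> g (Suc i)" by simp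
    have "{(i, l i), (Suc i, l i), (i, Suc (l i)), (Suc i, Suc (l i))} \<subseteq> skf l g"
      using i antg[of i] antl[of i] by (auto simp: skf_def)
    then show False using n by (auto simp: no_2x2_def)
  qed
next
  assume h: "\<forall>i. g (Suc i) \<le> Suc (l i)"
  show "no_2x2 (skf l g)"
  proof (unfold no_2x2_def, rule notI)
    assume "\<exists>i j. {(i, j), (Suc i, j), (i, Suc j), (Suc i, Suc j)} \<subseteq> skf l g"
    then obtain i j where "{(i, j), (Suc i, j), (i, Suc j), (Suc i, Suc j)} \<subseteq> skf l g" by blast
    then have "l i \<le> j" "Suc j < g (Suc i)" by (auto simp: skf_def)
    then show False using h[rule_format, of i] by simp
  qed
qed

abbreviation RS :: "(nat \<times> nat) set \<Rightarrow> (nat \<times> nat) \<Rightarrow> (nat \<times> nat) \<Rightarrow> bool" where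
  "RS S \<equiv> (\<lambda>x y. x \<in> S \<and> y \<in> S \<and> adjacent x y)"

lemma RS_sym: "(RS S)\<^sup>*\<^sup>* x y \<Longrightarrow> (RS S)\<^sup>*\<^sup>* y x"
proof (induction rule: rtranclp_induct)
  case base then show ?case by simp
next
  case (step y z)
  have r: "RS S z y" using step(2) by (auto simp: adjacent_def)
  show ?case by (rule converse_rtranclp_into_rtranclp[of "RS S", OF r step(3)])
qed

lemma RS_cut:
  assumes path: "(RS S)\<^sup>*\<^sup>* x y"
    and noc: "\<And>u v. u \<in> S \<Longrightarrow> v \<in> S \<Longrightarrow> adjacent u v \<Longrightarrow> P u \<Longrightarrow> P v"
    and Px: "P x"
  shows "P y"
  using path Px
proof (induction rule: rtranclp_induct)
  case base then show ?case .
next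
  case (step y z) then show ?case using noc by blast
qed

lemma row_conn:
  assumes "l i \<le> j" "j < g i"
  shows "(RS (skf l g))\<^sup>*\<^sup>* (i, j) (i, l i)"
  using assms
proof (induction j)
  case 0 then show ?case by simp
next
  case (Suc j)
  show ?case
  proof (cases "l i \<le> j")
    case True
    then have r: "RS (skf l g) (i, Suc j) (i, j)" using Suc.prems by (auto simp: skf_def adjacent_def)
    have h: "(RS (skf l g))\<^sup>*\<^sup>* (i, j) (i, l i)" using Suc True by simp
    show ?thesis by (rule converse_rtranclp_into_rtranclp[of "RS (skf l g)", OF r h])
  next
    case False
    then have "l i = Suc j" using Suc.prems by simp
    then show ?thesis by simp
  qed
qed

lemma RH_char:
  assumes antg: "\<And>i. g (Suc i) \<le> g i" and antl: "\<And>i. l (Suc i) \<le> l i"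
    and le: "\<And>i. l i \<le> g i" and fin: "\<And>i. i \<ge> M \<Longrightarrow> g i = 0"
  shows "cell_connected (skf l g) \<and> no_2x2 (skf l g) \<longleftrightarrow>
    (\<exists>a b. a \<le> b \<and> (\<forall>i. l i < g i \<longleftrightarrow> a \<le> i \<and> i \<le> b) \<and> (\<forall>i. a \<le> i \<longrightarrow> i < b \<longrightarrow> g (Suc i) = Suc (l i)))"
    (is "?L \<longleftrightarrow> ?R")
proof
  assume L: ?L
  let ?S = "skf l g"
  define NE where "NE = {i. l i < g i}"
  have NEfin: "finite NE"
  proof -
    have "NE \<subseteq> {..<M}"
    proof
      fix x assume "x \<in> NE"
      then show "x \<in> {..<M}" using fin[of x] by (cases "M \<le> x") (auto simp: NE_def)
    qed
    then show ?thesis by (rule finite_subset) simp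
  qed
  have Sne: "?S \<noteq> {}" using L by (simp add: cell_connected_def)
  then obtain x where "x \<in> ?S" by blast
  then have NEne: "NE \<noteq> {}"
  proof (cases x)
    case (Pair p q)
    assume "x \<in> ?S"
    then have "l p < g p" using Pair by (auto simp: skf_def)
    then show ?thesis by (auto simp: NE_def)
  qed
  define a where "a = Min NE"
  define b where "b = Max NE"
  have aNE: "a \<in> NE" and bNE: "b \<in> NE" using NEfin NEne by (auto simp: a_def b_def)
  have ab: "a \<le> b" using NEfin aNE by (simp add: b_def)
  have cross: "l i < g (Suc i)" if i1: "i1 \<le> i" "i1 \<in> NE" and i2: "i < i2" "i2 \<in> NE" for i i1 i2
  proof (rule ccontr)
    assume "\<not> l i < g (Suc i)"
    then have gl: "g (Suc i) \<le> l i" by simp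
    have c1: "(i1, l i1) \<in> ?S" and c2: "(i2, l i2) \<in> ?S" using i1 i2 by (auto simp: skf_def NE_def)
    have path: "(RS ?S)\<^sup>*\<^sup>* (i1, l i1) (i2, l i2)" using L c1 c2 by (auto simp: cell_connected_def)
    have "fst (i2, l i2) \<le> i"
    proof (rule RS_cut[OF path, where P="\<lambda>x. fst x \<le> i"])
      fix u v assume u: "u \<in> ?S" and v: "v \<in> ?S" and adj: "adjacent u v" and Pu: "fst u \<le> i"
      show "fst v \<le> i"
      proof (rule ccontr)
        assume "\<not> fst v \<le> i"
        then have "fst v = Suc i" "fst u = i" "snd u = snd v" using adj Pu by (auto simp: adjacent_def)
        then show False using u v gl by (cases u, cases v) (auto simp: skf_def)
      qed
    qed (use i1 in simp)
    then show False using i2 by simp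
  qed
  have NEiff: "l i < g i \<longleftrightarrow> a \<le> i \<and> i \<le> b" for i
  proof
    assume "l i < g i"
    then have "i \<in> NE" by (simp add: NE_def)
    then show "a \<le> i \<and> i \<le> b" using NEfin by (simp add: a_def b_def)
  next
    assume i: "a \<le> i \<and> i \<le> b"
    show "l i < g i"
    proof (cases "i = a")
      case True then show ?thesis using aNE by (simp add: NE_def)
    next
      case False
      then obtain i' where i': "i = Suc i'" "a \<le> i'" "i' < b" using i by (cases i) auto
      have "l i' < g i" using cross[of a i' b] aNE bNE i' by simp
      moreover have "l i \<le> l i'" using antl i' by simp
      ultimately show ?thesis by simp
    qed
  qed
  have no2: "\<forall>i. g (Suc i) \<le> Suc (l i)" using L no2x2_iff[of g l, OF antg antl] by simp
  have "\<forall>i. a \<le> i \<longrightarrow> i < b \<longrightarrow> g (Suc i) = Suc (l i)"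
  proof (intro allI impI)
    fix i assume "a \<le> i" "i < b"
    then have "l i < g (Suc i)" using cross[of a i b] aNE bNE by simp
    then show "g (Suc i) = Suc (l i)" using no2 by (simp add: le_antisym Suc_leI)
  qed
  then show ?R using ab NEiff by blast
next
  assume ?R
  then obtain a b where ab: "a \<le> b" and NEiff: "\<And>i. l i < g i \<longleftrightarrow> a \<le> i \<and> i \<le> b"
    and chain: "\<And>i. a \<le> i \<Longrightarrow> i < b \<Longrightarrow> g (Suc i) = Suc (l i)" by blast
  let ?S = "skf l g"
  have eqout: "g i = l i" if "\<not> (a \<le> i \<and> i \<le> b)" for i using NEiff[of i] le[of i] that by simp
  have no2: "\<forall>i. g (Suc i) \<le> Suc (l i)"
  proof
    fix i
    show "g (Suc i) \<le> Suc (l i)"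
    proof (cases "a \<le> i \<and> i < b")
      case True then show ?thesis using chain by simp
    next
      case False
      show ?thesis
      proof (cases "a \<le> Suc i \<and> Suc i \<le> b")
        case True
        then have "Suc i = a" using False by auto
        then have "g i = l i" using eqout[of i] by simp
        then show ?thesis using antg[of i] by simp
      next
        case False
        then show ?thesis using eqout[of "Suc i"] antl[of i] by simp
      qed
    qed
  qed
  have base: "(a, l a) \<in> ?S" using NEiff[of a] ab by (simp add: skf_def)
  have toBase: "(RS ?S)\<^sup>*\<^sup>* (i, j) (a, l a)" if "(i, j) \<in> ?S" for i j
  proof -
    have "a \<le> i \<and> i \<le> b" using that NEiff[of i] by (auto simp: skf_def)
    then obtain t where t: "i = a + t" "a + t \<le> b" by (metis le_add_diff_inverse)
    show ?thesis using that unfolding t(1) using t(2)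
    proof (induction t arbitrary: j)
      case 0
      then show ?case using row_conn[of l a j g] by (simp add: skf_def)
    next
      case (Suc t)
      let ?i = "a + Suc t"
      have h1: "(RS ?S)\<^sup>*\<^sup>* (?i, j) (?i, l ?i)" using Suc.prems row_conn[of l ?i j g] by (simp add: skf_def)
      have gi: "g ?i = Suc (l (a + t))" using chain[of "a + t"] Suc.prems by simp
      have inS1: "(?i, l (a + t)) \<in> ?S" using gi antl[of "a + t"] by (simp add: skf_def)
      have h2: "(RS ?S)\<^sup>*\<^sup>* (?i, l (a + t)) (?i, l ?i)"
        using row_conn[of l ?i "l (a + t)" g] inS1 by (simp add: skf_def)
      have inS2: "(a + t, l (a + t)) \<in> ?S" using NEiff[of "a + t"] Suc.prems by (simp add: skf_def)
      have h3: "RS ?S (?i, l (a + t)) (a + t, l (a + t))" using inS1 inS2 by (simp add: adjacent_def)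
      have h4: "(RS ?S)\<^sup>*\<^sup>* (a + t, l (a + t)) (a, l a)" using Suc.IH[of "l (a + t)"] inS2 Suc.prems by simp
      have "(RS ?S)\<^sup>*\<^sup>* (?i, j) (?i, l (a + t))" using h1 RS_sym[OF h2] by (rule rtranclp_trans)
      moreover have "(RS ?S)\<^sup>*\<^sup>* (?i, l (a + t)) (a, l a)"
        by (rule converse_rtranclp_into_rtranclp[of "RS ?S", OF h3 h4])
      ultimately show ?case by (rule rtranclp_trans)
    qed
  qed
  have conn: "cell_connected ?S"
    unfolding cell_connected_def
  proof (intro conjI ballI)
    show "?S \<noteq> {}" using base by blast
  next
    fix c d assume c: "c \<in> ?S" and d: "d \<in> ?S"
    have "(RS ?S)\<^sup>*\<^sup>* c (a, l a)" using toBase c by (cases c) auto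
    moreover have "(RS ?S)\<^sup>*\<^sup>* (a, l a) d" using toBase d RS_sym by (cases d) blast
    ultimately show "(RS ?S)\<^sup>*\<^sup>* c d" by (rule rtranclp_trans)
  qed
  show ?L using conn no2 no2x2_iff[of g l, OF antg antl] by simp
qed

lemma skf_rows:
  assumes "\<And>i. l i < g i \<longleftrightarrow> a \<le> i \<and> i \<le> b"
  shows "fst ` skf l g = {a..b}"
proof
  show "fst ` skf l g \<subseteq> {a..b}"
  proof
    fix i assume "i \<in> fst ` skf l g"
    then obtain j where "l i \<le> j" "j < g i" by (auto simp: skf_def)
    then have "l i < g i" by simp
    then show "i \<in> {a..b}" using assms[of i] by simp
  qed
  show "{a..b} \<subseteq> fst ` skf l g"
  proof
    fix i assume "i \<in> {a..b}"
    then have "(i, l i) \<in> skf l g" using assms[of i] by (simp add: skf_def)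
    then show "i \<in> fst ` skf l g" by force
  qed
qed

lemma part_wdec: "is_partition la \<Longrightarrow> wdec la"
  by (simp add: is_partition_def)

lemma rf_anti: "wdec la \<Longrightarrow> rf la (Suc i) \<le> rf la i"
  by (auto simp: rf_def intro: wdec_nth)

lemma rf_anti': "wdec la \<Longrightarrow> i \<le> i' \<Longrightarrow> rf la i' \<le> rf la i"
  by (auto simp: rf_def intro: wdec_nth)

lemma rf_pos: "is_partition la \<Longrightarrow> 0 < rf la i \<longleftrightarrow> i < length la"
  by (auto simp: rf_def is_partition_def)

lemma rf_ge: "i \<ge> length la \<Longrightarrow> rf la i = 0"
  by (simp add: rf_def)

lemma part_eq_rf:
  assumes "is_partition la" "is_partition ga" "\<And>i. rf la i = rf ga i"
  shows "la = ga"
proof -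
  have len: "length la = length ga"
  proof (rule ccontr)
    assume ne: "length la \<noteq> length ga"
    show False
    proof (cases "length la < length ga")
      case True
      then have "0 < rf ga (length la)" using rf_pos[OF assms(2)] by simp
      then show False using assms(3)[of "length la"] by (simp add: rf_def)
    next
      case False
      then have "length ga < length la" using ne by simp
      then have "0 < rf la (length ga)" using rf_pos[OF assms(1)] by simp
      then show False using assms(3)[of "length ga"] by (simp add: rf_def)
    qed
  qed
  show ?thesis
  proof (rule nth_equalityI[OF len])
    fix i assume i: "i < length la"
    show "la!i = ga!i" using assms(3)[of i] i len by (simp add: rf_def)
  qed
qed

definition tw :: "(nat \<Rightarrow> nat) \<Rightarrow> nat \<Rightarrow> nat list" where
  "tw g r = takeWhile (\<lambda>x. 0 < x) (map g [0..<r])"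

lemma tw_props:
  assumes anti: "\<And>i. g (Suc i) \<le> g i" and zero: "\<And>i. i \<ge> r \<Longrightarrow> g i = 0"
  shows "is_partition (tw g r)" "\<And>i. rf (tw g r) i = g i" "length (tw g r) \<le> r"
proof -
  have anti': "g i' \<le> g i" if "i \<le> i'" for i i'
    using that by (induction i' rule: dec_induct) (auto intro: order_trans[OF anti])
  define m where "m = length (tw g r)"
  have mr: "m \<le> r" by (simp add: m_def tw_def length_takeWhile_le[THEN order_trans])
  have nth: "tw g r ! i = g i" if "i < m" for i
  proof -
    have "tw g r ! i = map g [0..<r] ! i" using that unfolding m_def tw_def by (rule takeWhile_nth)
    then show ?thesis using that mr by simp
  qed
  have pos: "0 < g i" if "i < m" for i
  proof -
    have "tw g r ! i \<in> set (tw g r)" using that by (simp add: m_def)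
    then have "0 < tw g r ! i" unfolding tw_def by (blast dest: set_takeWhileD)
    then show ?thesis using nth that by simp
  qed
  have z: "g i = 0" if "i \<ge> m" for i
  proof (cases "i \<ge> r")
    case True then show ?thesis using zero by simp
  next
    case False
    then have mr': "m < r" using that by simp
    have "\<not> 0 < map g [0..<r] ! m"
      unfolding m_def tw_def by (rule nth_length_takeWhile) (use mr' in \<open>simp add: m_def tw_def\<close>)
    then have "g m = 0" using mr' by simp
    then show ?thesis using anti'[OF that] by simp
  qed
  show "\<And>i. rf (tw g r) i = g i"
    using nth z by (auto simp: rf_def m_def)
  show "length (tw g r) \<le> r" using mr by (simp add: m_def)
  show "is_partition (tw g r)"
    unfolding is_partition_def
  proof
    show "sorted_wrt (\<ge>) (tw g r)"
      unfolding sorted_wrt_iff_nth_less using nth anti' by (auto simp: m_def)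
    show "\<forall>x\<in>set (tw g r). 0 < x" unfolding tw_def by (auto dest: set_takeWhileD)
  qed
qed

lemma card_diagram: "card (diagram la) = psize la"
proof -
  have "diagram la = (SIGMA i:{..<length la}. {..<la!i})" by (auto simp: diagram_def)
  then show ?thesis by (simp add: psize_sum)
qed

lemma finite_diagram: "finite (diagram la)"
proof -
  have "diagram la = (SIGMA i:{..<length la}. {..<la!i})" by (auto simp: diagram_def)
  then show ?thesis by simp
qed

lemma psize_rf: "m \<ge> length la \<Longrightarrow> psize la = (\<Sum>i<m. rf la i)"
proof -
  assume m: "m \<ge> length la"
  have "(\<Sum>i<m. rf la i) = (\<Sum>i<length la. rf la i)"
    using m by (intro sum.mono_neutral_right) (auto simp: rf_def)
  also have "\<dots> = psize la" by (simp add: psize_sum rf_def)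
  finally show ?thesis by simp
qed

lemma skew_skf: "skew ga la = skf (rf la) (rf ga)"
  by (auto simp: skew_def skf_def diagram_rf)

lemma diagram_sub: "diagram la \<subseteq> diagram ga \<longleftrightarrow> (\<forall>i. rf la i \<le> rf ga i)"
proof
  assume s: "diagram la \<subseteq> diagram ga"
  show "\<forall>i. rf la i \<le> rf ga i"
  proof
    fix i show "rf la i \<le> rf ga i"
    proof (rule ccontr)
      assume "\<not> rf la i \<le> rf ga i"
      then have "(i, rf ga i) \<in> diagram la" by (simp add: diagram_rf)
      then have "(i, rf ga i) \<in> diagram ga" using s by blast
      then show False by (simp add: diagram_rf)
    qed
  qed
qed (auto simp: diagram_rf intro: order_less_le_trans)

lemma tele:
  fixes l g :: "nat \<Rightarrow> nat"
  assumes ab: "a \<le> b" and br: "b < r"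
    and out: "\<And>R. R < r \<Longrightarrow> R < a \<or> b < R \<Longrightarrow> g R = l R"
    and mid: "\<And>R. a < R \<Longrightarrow> R \<le> b \<Longrightarrow> g R = Suc (l (R - 1))"
  shows "(\<Sum>R<r. g R) + l b = (\<Sum>R<r. l R) + g a + (b - a)"
proof -
  define d where "d R = int (g R) - int (l R)" for R
  have "(\<Sum>R<r. d R) = (\<Sum>R\<in>{a..b}. d R)"
    using ab br out by (intro sum.mono_neutral_right) (auto simp: d_def)
  also have "{a..b} = insert a {Suc a..b}" using ab by auto
  also have "(\<Sum>R\<in>insert a {Suc a..b}. d R) = d a + (\<Sum>R\<in>{Suc a..b}. d R)" by simp
  also have "(\<Sum>R\<in>{Suc a..b}. d R) = (\<Sum>i\<in>{a..<b}. d (Suc i))"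
    by (rule sum.reindex_bij_witness[where i="Suc" and j="\<lambda>R. R - 1"]) auto
  also have "\<dots> = (\<Sum>i\<in>{a..<b}. 1 - (int (l (Suc i)) - int (l i)))"
    using mid by (intro sum.cong refl) (auto simp: d_def)
  also have "\<dots> = int (b - a) - (int (l b) - int (l a))"
  proof -
    have t: "(\<Sum>i\<in>{a..<b}. int (l (Suc i)) - int (l i)) = int (l b) - int (l a)"
      using sum_Suc_diff'[OF ab, of "\<lambda>i. int (l i)"] by simp
    have "(\<Sum>i\<in>{a..<b}. 1 - (int (l (Suc i)) - int (l i))) = (\<Sum>i\<in>{a..<b}. 1) - (\<Sum>i\<in>{a..<b}. int (l (Suc i)) - int (l i))"
      by (rule sum_subtractf)
    then show ?thesis using t ab by simp
  qed
  finally have "(\<Sum>R<r. d R) = int (g a) - int (l b) + int (b - a)" by (simp add: d_def)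
  moreover have "(\<Sum>R<r. d R) = int (\<Sum>R<r. g R) - int (\<Sum>R<r. l R)"
    by (simp add: d_def sum_subtractf)
  ultimately show ?thesis by linarith
qed

lemma rf_pad: "rf (la @ replicate m 0) = rf la"
  by (rule ext) (auto simp: rf_def nth_append)

lemma sp_pad_nth:
  assumes "length la \<le> r" "j < r"
  shows "shifted_parts (la @ replicate (r - length la) 0) ! j = rf la (r - 1 - j) + j"
proof -
  have "shifted_parts (la @ replicate (r - length la) 0) ! j = (la @ replicate (r - length la) 0) ! (r - 1 - j) + j"
    using assms by (simp add: sp_nth)
  also have "(la @ replicate (r - length la) 0) ! (r - 1 - j) = rf (la @ replicate (r - length la) 0) (r - 1 - j)"
    using assms by (simp add: rf_def)
  finally show ?thesis by (simp add: rf_pad)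
qed

locale hk =
  fixes la :: "nat list" and k r :: nat
  assumes part: "is_partition la" and k1: "1 \<le> k" and rk: "length la + k \<le> r"
begin

definition be :: "nat \<Rightarrow> nat" where "be R = rf la R + (r - 1 - R)"
definition nn :: "nat list" where "nn = shifted_parts (la @ replicate (r - length la) 0)"

lemma nn_len: "length nn = r" using rk by (simp add: nn_def)

lemma nn_nth: "j < r \<Longrightarrow> nn ! j = rf la (r - 1 - j) + j"
  using rk by (simp add: nn_def sp_pad_nth)

lemma nn_be: "j < r \<Longrightarrow> nn ! j = be (r - 1 - j)"
  by (simp add: nn_nth be_def)

lemma l_anti: "rf la (Suc R) \<le> rf la R" using rf_anti[OF part_wdec[OF part]] .
lemma l_anti': "R \<le> R' \<Longrightarrow> rf la R' \<le> rf la R" using rf_anti'[OF part_wdec[OF part]] .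
lemma l_zero: "R \<ge> length la \<Longrightarrow> rf la R = 0" by (simp add: rf_def)

lemma be_strict: "R < R' \<Longrightarrow> R' < r \<Longrightarrow> be R' < be R"
  using l_anti'[of R R'] by (simp add: be_def)

lemma be_mono: "R \<le> R' \<Longrightarrow> R' < r \<Longrightarrow> be R' \<le> be R"
  using be_strict[of R R'] by (cases "R = R'") auto

definition Valid :: "nat set" where "Valid = {j. j < r \<and> nn ! j + k \<notin> set nn}"

definition bb :: "nat \<Rightarrow> nat" where "bb j = r - 1 - j"
definition BB :: "nat \<Rightarrow> nat" where "BB j = nn ! j + k"
definition aa :: "nat \<Rightarrow> nat" where "aa j = (LEAST R. be R < BB j)"
definition qq :: "nat \<Rightarrow> nat" where "qq j = bb j - aa j"
definition gf :: "nat \<Rightarrow> nat \<Rightarrow> nat" where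
  "gf j R = (if R < aa j \<or> bb j < R then rf la R else if R = aa j then rf la (bb j) + k - qq j else Suc (rf la (R - 1)))"
definition gam :: "nat \<Rightarrow> nat list" where "gam j = tw (gf j) r"

context
  fixes j assumes jV: "j \<in> Valid"
begin

lemma jr: "j < r" using jV by (simp add: Valid_def)
lemma bbr: "bb j < r" using jr by (simp add: bb_def)
lemma BB_be: "BB j = be (bb j) + k" using jr by (simp add: BB_def nn_be bb_def)
lemma BB_ne: "R < r \<Longrightarrow> BB j \<noteq> be R"
proof
  assume R: "R < r" and eq: "BB j = be R"
  have e: "nn ! (r - 1 - R) = be R" using R by (simp add: nn_be)
  have "r - 1 - R < length nn" using R nn_len by simp
  then have "nn ! (r - 1 - R) \<in> set nn" by (rule nth_mem)
  then have "BB j \<in> set nn" using e eq by simp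
  then show False using jV by (simp add: Valid_def BB_def)
qed

lemma aa_le: "aa j \<le> bb j"
  unfolding aa_def by (rule Least_le) (use k1 in \<open>simp add: BB_be\<close>)

lemma be_aa: "be (aa j) < BB j"
  unfolding aa_def by (rule LeastI[of _ "bb j"]) (use k1 in \<open>simp add: BB_be\<close>)

lemma below_aa: "R < aa j \<Longrightarrow> BB j < be R"
proof -
  assume R: "R < aa j"
  have "\<not> be R < BB j" using R unfolding aa_def by (rule not_less_Least)
  moreover have "R < r" using R aa_le bbr by simp
  ultimately show ?thesis using BB_ne[of R] by simp
qed

lemma above_aa: "aa j \<le> R \<Longrightarrow> R < r \<Longrightarrow> be R < BB j"
  using be_mono[of "aa j" R] be_aa by simp

lemma qq_lt: "qq j < k"
proof -
  have "be (aa j) < BB j" by (rule be_aa)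
  then have "rf la (aa j) + (r - 1 - aa j) < rf la (bb j) + (r - 1 - bb j) + k"
    by (simp add: be_def BB_be)
  moreover have "rf la (bb j) \<le> rf la (aa j)" using aa_le by (rule l_anti')
  ultimately show ?thesis using aa_le bbr by (simp add: qq_def)
qed

lemma gf_anti: "gf j (Suc R) \<le> gf j R"
proof -
  have bA: "be (aa j) < BB j" by (rule be_aa)
  have ab: "aa j \<le> bb j" by (rule aa_le)
  have br: "bb j < r" by (rule bbr)
  have q: "qq j = bb j - aa j" by (simp add: qq_def)
  show ?thesis
  proof (cases "Suc R < aa j")
    case True then show ?thesis using l_anti[of R] by (simp add: gf_def)
  next
    case False
    show ?thesis
    proof (cases "Suc R = aa j")
      case True
      have "BB j < be R" using True by (intro below_aa) simp
      then have "rf la (bb j) + (r - 1 - bb j) + k < rf la R + (r - 1 - R)"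
        by (simp add: be_def BB_be)
      then show ?thesis using True ab br q by (simp add: gf_def)
    next
      case False
      then have a1: "aa j \<le> R" using \<open>\<not> Suc R < aa j\<close> by simp
      show ?thesis
      proof (cases "Suc R \<le> bb j")
        case True
        show ?thesis
        proof (cases "R = aa j")
          case True
          then have "rf la (aa j) + (r - 1 - aa j) < rf la (bb j) + (r - 1 - bb j) + k"
            using bA by (simp add: be_def BB_be)
          then show ?thesis using True \<open>Suc R \<le> bb j\<close> ab br q by (simp add: gf_def)
        next
          case False
          then show ?thesis using a1 True l_anti[of "R - 1"] by (simp add: gf_def)
        qed
      next
        case False
        then have "bb j \<le> R" by simp
        show ?thesis
        proof (cases "R = bb j")
          case True
          show ?thesis
          proof (cases "aa j = bb j")
            case True
            then show ?thesis using \<open>R = bb j\<close> l_anti[of R] by (simp add: gf_def qq_def)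
          next
            case False
            then have "aa j < R" using ab \<open>R = bb j\<close> by simp
            moreover have "rf la (Suc R) \<le> rf la (R - 1)" by (rule l_anti') simp
            ultimately show ?thesis using \<open>R = bb j\<close> by (simp add: gf_def)
          qed
        next
          case False
          then show ?thesis using \<open>bb j \<le> R\<close> l_anti[of R] by (simp add: gf_def)
        qed
      qed
    qed
  qed
qed

end
end

context hk
begin

context
  fixes j assumes jV: "j \<in> Valid"
begin

lemma aa_strict: "rf la (aa j) + qq j < rf la (bb j) + k"
proof -
  have "be (aa j) < BB j" by (rule be_aa[OF jV])
  then have "rf la (aa j) + (r - 1 - aa j) < rf la (bb j) + (r - 1 - bb j) + k"
    using jV by (simp add: be_def BB_be)
  then show ?thesis using aa_le[OF jV] bbr[OF jV] by (simp add: qq_def)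
qed

lemma lt_iff: "rf la R < gf j R \<longleftrightarrow> aa j \<le> R \<and> R \<le> bb j"
proof (cases "R < aa j \<or> bb j < R")
  case True then show ?thesis by (auto simp: gf_def)
next
  case False
  show ?thesis
  proof (cases "R = aa j")
    case True then show ?thesis using aa_strict aa_le[OF jV] by (simp add: gf_def)
  next
    case False
    then show ?thesis using \<open>\<not> (R < aa j \<or> bb j < R)\<close> l_anti'[of "R - 1" R] by (simp add: gf_def)
  qed
qed

lemma l_le_gf: "rf la R \<le> gf j R"
proof (cases "rf la R < gf j R")
  case False
  then have "\<not> (aa j \<le> R \<and> R \<le> bb j)" using lt_iff by simp
  then show ?thesis by (auto simp: gf_def)
qed simp

lemma gf_chain: "aa j \<le> R \<Longrightarrow> R < bb j \<Longrightarrow> gf j (Suc R) = Suc (rf la R)"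
  by (simp add: gf_def)

lemma gf_out: "R < aa j \<or> bb j < R \<Longrightarrow> gf j R = rf la R"
  by (simp add: gf_def)

lemma gf_mid: "aa j < R \<Longrightarrow> R \<le> bb j \<Longrightarrow> gf j R = Suc (rf la (R - 1))"
  by (simp add: gf_def)

lemma gf_aa: "gf j (aa j) = rf la (bb j) + k - qq j"
  using aa_le[OF jV] by (simp add: gf_def)

lemma gf_zero: "R \<ge> r \<Longrightarrow> gf j R = 0"
proof -
  assume R: "R \<ge> r"
  then have "bb j < R" using bbr[OF jV] by simp
  then have "gf j R = rf la R" by (simp add: gf_def)
  also have "\<dots> = 0" using R rk by (intro l_zero) simp
  finally show ?thesis .
qed

lemma gam_props: "is_partition (gam j)" "\<And>i. rf (gam j) i = gf j i" "length (gam j) \<le> r"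
  using tw_props[of "gf j" r, OF gf_anti[OF jV] gf_zero] by (simp_all add: gam_def)

lemma gam_psize: "psize (gam j) = psize la + k"
proof -
  have t: "(\<Sum>R<r. gf j R) + rf la (bb j) = (\<Sum>R<r. rf la R) + gf j (aa j) + (bb j - aa j)"
    by (rule tele[OF aa_le[OF jV] bbr[OF jV]]) (auto simp: gf_def)
  have "gf j (aa j) + (bb j - aa j) = rf la (bb j) + k"
    using qq_lt[OF jV] by (simp add: gf_aa qq_def)
  then have "(\<Sum>R<r. gf j R) = (\<Sum>R<r. rf la R) + k" using t by simp
  moreover have "psize (gam j) = (\<Sum>R<r. gf j R)"
    using psize_rf[of "gam j" r] gam_props by simp
  moreover have "psize la = (\<Sum>R<r. rf la R)" using psize_rf[of la r] rk by simp
  ultimately show ?thesis by simp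
qed

lemma gam_rim: "rim_hook (gam j) la k"
proof -
  have rfg: "rf (gam j) = gf j" using gam_props(2) by (rule ext)
  have conn: "cell_connected (skf (rf la) (gf j)) \<and> no_2x2 (skf (rf la) (gf j))"
  proof (rule RH_char[of "gf j" "rf la" r, THEN iffD2])
    show "\<And>i. gf j (Suc i) \<le> gf j i" by (rule gf_anti[OF jV])
    show "\<And>i. rf la (Suc i) \<le> rf la i" by (rule l_anti)
    show "\<And>i. rf la i \<le> gf j i" by (rule l_le_gf)
    show "\<And>i. r \<le> i \<Longrightarrow> gf j i = 0" by (rule gf_zero)
    show "\<exists>a b. a \<le> b \<and> (\<forall>i. rf la i < gf j i \<longleftrightarrow> a \<le> i \<and> i \<le> b) \<and>
        (\<forall>i. a \<le> i \<longrightarrow> i < b \<longrightarrow> gf j (Suc i) = Suc (rf la i))"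
      using aa_le[OF jV] lt_iff gf_chain by blast
  qed
  show ?thesis
    unfolding rim_hook_def skew_skf rfg diagram_sub
    using gam_props(1) part gam_psize conn l_le_gf by (simp add: rfg)
qed

lemma gam_ht: "ht (gam j) la = qq j"
proof -
  have rfg: "rf (gam j) = gf j" using gam_props(2) by (rule ext)
  have "fst ` skew (gam j) la = {aa j..bb j}"
    unfolding skew_skf rfg by (rule skf_rows) (rule lt_iff)
  then show ?thesis by (simp add: ht_def qq_def)
qed

end
end

context hk
begin

context
  fixes j assumes jV: "j \<in> Valid"
begin

lemma jq: "j + qq j < r"
  using aa_le[OF jV] bbr[OF jV] jr[OF jV] by (simp add: qq_def bb_def)

lemma aa_eq: "aa j = r - 1 - (j + qq j)"
  using aa_le[OF jV] jr[OF jV] by (simp add: qq_def bb_def)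

definition npr :: "nat list" where
  "npr = take j nn @ take (qq j) (drop (Suc j) nn) @ BB j # drop (Suc j + qq j) nn"

lemma npr_len: "length npr = r"
  using jq jr[OF jV] by (simp add: npr_def nn_len)

lemma npr_nth:
  assumes i: "i < r"
  shows "npr ! i = (if i < j then nn ! i else if i < j + qq j then nn ! Suc i else if i = j + qq j then BB j else nn ! i)"
proof -
  have lj: "length (take j nn) = j" using jr[OF jV] nn_len by simp
  have lq: "length (take (qq j) (drop (Suc j) nn)) = qq j" using jq nn_len by simp
  have mj: "min (length nn) j = j" using jr[OF jV] nn_len by simp
  have mq: "min (length nn - Suc j) (qq j) = qq j" using jq nn_len by simp
  show ?thesis
  proof (cases "i < j")
    case True then show ?thesis using i nn_len by (simp add: npr_def nth_append lj)
  next
    case False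
    show ?thesis
    proof (cases "i < j + qq j")
      case True
      have ij: "i - j < qq j" using True False by linarith
      then have "npr ! i = take (qq j) (drop (Suc j) nn) ! (i - j)" using False by (simp add: npr_def nth_append mj mq)
      also have "\<dots> = nn ! Suc i" using True False jq nn_len by simp
      finally show ?thesis using True False by simp
    next
      case False2: False
      have ij: "\<not> i - j < qq j" using False2 by linarith
      then have "npr ! i = (BB j # drop (Suc j + qq j) nn) ! (i - j - qq j)"
        using False by (simp add: npr_def nth_append mj mq)
      also have "\<dots> = (if i = j + qq j then BB j else nn ! i)"
        using False False2 i nn_len by (cases "i = j + qq j") (auto simp: nth_Cons')
      finally show ?thesis using False False2 by simp
    qed
  qed
qed

lemma gam_sp: "shifted_parts (gam j @ replicate (r - length (gam j)) 0) = npr"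
proof (rule nth_equalityI)
  show "length (shifted_parts (gam j @ replicate (r - length (gam j)) 0)) = length npr"
    using gam_props(3)[OF jV] npr_len by simp
next
  fix i assume "i < length (shifted_parts (gam j @ replicate (r - length (gam j)) 0))"
  then have i: "i < r" using gam_props(3)[OF jV] by simp
  have lhs: "shifted_parts (gam j @ replicate (r - length (gam j)) 0) ! i = gf j (r - 1 - i) + i"
    using sp_pad_nth[OF gam_props(3)[OF jV] i] gam_props(2)[OF jV] by simp
  have bbj: "bb j = r - 1 - j" by (simp add: bb_def)
  have q: "qq j < k" by (rule qq_lt[OF jV])
  have ae: "aa j = r - 1 - (j + qq j)" by (rule aa_eq)
  have jqr: "j + qq j < r" by (rule jq)
  show "shifted_parts (gam j @ replicate (r - length (gam j)) 0) ! i = npr ! i"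
  proof (cases "i < j")
    case True
    have "gf j (r - 1 - i) = rf la (r - 1 - i)" using True i bbj jr[OF jV] by (intro gf_out[OF jV]) arith
    then show ?thesis using lhs True i by (simp add: npr_nth nn_nth)
  next
    case False
    show ?thesis
    proof (cases "i < j + qq j")
      case True
      have "gf j (r - 1 - i) = Suc (rf la (r - 1 - i - 1))"
        using True False i bbj ae jqr by (intro gf_mid[OF jV]) auto
      moreover have "r - 1 - i - 1 = r - 1 - Suc i" by simp
      ultimately show ?thesis using lhs True False i jqr by (simp add: npr_nth nn_nth)
    next
      case False2: False
      show ?thesis
      proof (cases "i = j + qq j")
        case True
        have "gf j (r - 1 - i) = rf la (bb j) + k - qq j" using True ae gf_aa[OF jV] by simp
        then show ?thesis using lhs True q i jr[OF jV] bbj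
          by (simp add: npr_nth BB_def nn_nth)
      next
        case False3: False
        have "gf j (r - 1 - i) = rf la (r - 1 - i)" using False2 False3 i ae by (intro gf_out[OF jV]) auto
        then show ?thesis using lhs False False2 False3 i by (simp add: npr_nth nn_nth)
      qed
    qed
  qed
qed

lemma gam_JT: "JT h (nn[j := BB j]) = (-1) ^ qq j * JT h (shifted_parts (gam j @ replicate (r - length (gam j)) 0))"
proof -
  have "nn[j := BB j] = take j nn @ BB j # drop (Suc j) nn"
    using jr[OF jV] nn_len by (simp add: upd_conv_take_nth_drop)
  also have "drop (Suc j) nn = take (qq j) (drop (Suc j) nn) @ drop (Suc j + qq j) nn"
  proof -
    have d: "drop (qq j) (drop (Suc j) nn) = drop (Suc j + qq j) nn" by (simp add: add.commute)
    have "drop (Suc j) nn = take (qq j) (drop (Suc j) nn) @ drop (qq j) (drop (Suc j) nn)"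
      by (rule append_take_drop_id[symmetric])
    then show ?thesis using d by simp
  qed
  finally have e: "nn[j := BB j] = take j nn @ BB j # take (qq j) (drop (Suc j) nn) @ drop (Suc j + qq j) nn" .
  have lq: "length (take (qq j) (drop (Suc j) nn)) = qq j" using jq nn_len by simp
  have mq: "min (length nn - Suc j) (qq j) = qq j" using jq nn_len by simp
  show ?thesis unfolding e gam_sp
    using JT_bubble[of h "take j nn" "BB j" "take (qq j) (drop (Suc j) nn)" "drop (Suc j + qq j) nn"]
    by (simp add: lq mq npr_def)
qed

end
end

lemma JT_sp_pad_gen:
  assumes h0: "h 0 = 1"
  shows "JT h (shifted_parts (la @ replicate m 0)) = JT h (shifted_parts la)"
proof (induction m)
  case 0 then show ?case by simp
next
  case (Suc m)
  have "la @ replicate (Suc m) 0 = (la @ replicate m 0) @ [0]"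
    by (simp add: replicate_append_same[symmetric])
  then have "shifted_parts (la @ replicate (Suc m) 0) = 0 # map Suc (shifted_parts (la @ replicate m 0))"
    by (simp only: sp_snoc0)
  then have "JT h (shifted_parts (la @ replicate (Suc m) 0)) = JT h (shifted_parts (la @ replicate m 0))"
    by (simp only: JT_pad[of h, OF h0])
  then show ?case using Suc by simp
qed

context hk
begin

lemma gam_inj: "inj_on gam Valid"
proof (rule inj_onI)
  fix j j' assume j: "j \<in> Valid" and j': "j' \<in> Valid" and eq: "gam j = gam j'"
  have "gf j R = gf j' R" for R using gam_props(2)[OF j, of R] gam_props(2)[OF j', of R] eq by simp
  then have "(aa j \<le> R \<and> R \<le> bb j) = (aa j' \<le> R \<and> R \<le> bb j')" for R
    using lt_iff[OF j, of R] lt_iff[OF j', of R] by simp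
  then have "bb j = bb j'" using aa_le[OF j] aa_le[OF j'] by (meson le_antisym order_refl)
  then show "j = j'" using jr[OF j] jr[OF j'] by (simp add: bb_def)
qed

lemma invalid_zero:
  assumes j: "j < r" and nv: "j \<notin> Valid"
  shows "JT h (nn[j := nn ! j + k]) = 0"
proof -
  have "nn ! j + k \<in> set nn" using j nv by (simp add: Valid_def)
  then obtain i where i: "i < length nn" "nn ! i = nn ! j + k" by (auto simp: in_set_conv_nth)
  have ij: "i \<noteq> j" using i k1 by auto
  show ?thesis
    by (rule JT_dup[of i _ j]) (use i ij j nn_len in \<open>auto simp: nth_list_update\<close>)
qed

lemma rim_length:
  assumes rh: "rim_hook ga la k"
  shows "length ga \<le> length la + k"
proof -
  have sub: "diagram la \<subseteq> diagram ga" and ps: "psize ga = psize la + k" using rh by (auto simp: rim_hook_def)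
  have cs: "card (skew ga la) = k"
    using sub ps by (simp add: skew_def card_Diff_subset finite_diagram card_diagram)
  have ss: "(\<lambda>i. (i, 0)) ` {length la..<length ga} \<subseteq> skew ga la"
    using rh by (auto simp: skew_def diagram_def rim_hook_def is_partition_def)
  have fs: "finite (skew ga la)" by (simp add: skew_def finite_diagram)
  have "card ((\<lambda>i. (i, 0::nat)) ` {length la..<length ga}) \<le> card (skew ga la)"
    by (rule card_mono[OF fs ss])
  then have "card ((\<lambda>i. (i, 0::nat)) ` {length la..<length ga}) \<le> k" using cs by simp
  then show ?thesis by (simp add: card_image inj_on_def)
qed

lemma gam_surj:
  assumes rh: "rim_hook ga la k"
  shows "\<exists>j\<in>Valid. ga = gam j"
proof -
  define g where "g = rf ga"
  have pg: "is_partition ga" and sub: "diagram la \<subseteq> diagram ga" and ps: "psize ga = psize la + k"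
    and cn: "cell_connected (skew ga la)" and n2: "no_2x2 (skew ga la)"
    using rh by (auto simp: rim_hook_def)
  have le: "\<And>i. rf la i \<le> g i" using sub by (simp add: diagram_sub g_def)
  have ganti: "\<And>i. g (Suc i) \<le> g i" using rf_anti[OF part_wdec[OF pg]] by (simp add: g_def)
  have ganti': "\<And>i i'. i \<le> i' \<Longrightarrow> g i' \<le> g i" using rf_anti'[OF part_wdec[OF pg]] by (simp add: g_def)
  have gz: "\<And>i. i \<ge> length ga \<Longrightarrow> g i = 0" by (simp add: g_def rf_def)
  have "\<exists>a b. a \<le> b \<and> (\<forall>i. rf la i < g i \<longleftrightarrow> a \<le> i \<and> i \<le> b) \<and> (\<forall>i. a \<le> i \<longrightarrow> i < b \<longrightarrow> g (Suc i) = Suc (rf la i))"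
    using RH_char[of g "rf la" "length ga", OF ganti l_anti le gz] cn n2 by (simp add: skew_skf g_def)
  then obtain a b where ab: "a \<le> b" and NE: "\<And>i. rf la i < g i \<longleftrightarrow> a \<le> i \<and> i \<le> b"
    and chain: "\<And>i. a \<le> i \<Longrightarrow> i < b \<Longrightarrow> g (Suc i) = Suc (rf la i)" by blast
  have lg: "length ga \<le> r" using rim_length[OF rh] rk by simp
  have blen: "b < length ga"
  proof (rule ccontr)
    assume "\<not> b < length ga"
    then have "g b = 0" using gz by simp
    then show False using NE[of b] ab by simp
  qed
  then have br: "b < r" using lg by simp
  define j where "j = r - 1 - b"
  have jr': "j < r" using br by (simp add: j_def)
  have bj: "r - 1 - j = b" using br by (simp add: j_def)
  have out: "g R = rf la R" if "R < a \<or> b < R" for R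
  proof -
    have "\<not> rf la R < g R" using NE[of R] that by auto
    then show ?thesis using le[of R] by simp
  qed
  have mid: "g R = Suc (rf la (R - 1))" if aR: "a < R" and Rb: "R \<le> b" for R
  proof -
    obtain R' where R': "R = Suc R'" using aR by (cases R) auto
    then show ?thesis using chain[of R'] aR Rb by simp
  qed
  have t: "(\<Sum>R<r. g R) + rf la b = (\<Sum>R<r. rf la R) + g a + (b - a)"
    by (rule tele[OF ab br]) (use out mid in auto)
  have sg: "(\<Sum>R<r. g R) = (\<Sum>R<r. rf la R) + k"
    using ps psize_rf[of ga r] psize_rf[of la r] lg rk by (simp add: g_def)
  have ga_eq: "g a + (b - a) = rf la b + k" using t sg by simp
  define BE where "BE R = g R + (r - 1 - R)" for R
  have BE_strict: "BE R' < BE R" if "R < R'" "R' < r" for R R'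
    using ganti'[of R R'] that by (simp add: BE_def)
  have BB_eq: "nn ! j + k = BE a"
    using ga_eq jr' ab br by (simp add: nn_nth bj BE_def j_def)
  have be_shift: "be R = BE (Suc R)" if "a \<le> R" "R < b" for R
    using chain[OF that] that br by (simp add: be_def BE_def)
  have be_out: "be R = BE R" if "R < a" for R using out[of R] that by (simp add: be_def BE_def)
  have valid: "j \<in> Valid"
  proof -
    have "nn ! j + k \<notin> set nn"
    proof
      assume "nn ! j + k \<in> set nn"
      then obtain i where i: "i < r" "nn ! i = nn ! j + k" using nn_len by (auto simp: in_set_conv_nth)
      define R where "R = r - 1 - i"
      have R: "R < r" "be R = BE a" using i BB_eq by (auto simp: R_def nn_be)
      show False
      proof (cases "R < a")
        case True then show ?thesis using R be_out[OF True] BE_strict[of R a] ab br by simp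
      next
        case False
        show ?thesis
        proof (cases "R < b")
          case True then show ?thesis using R be_shift[of R] False BE_strict[of a "Suc R"] br by simp
        next
          case False2: False
          have "be R \<le> be b" using False2 R(1) by (intro be_mono) simp
          moreover have "be b + k = BE a" using BB_eq jr' bj by (simp add: nn_be)
          ultimately show ?thesis using R k1 by simp
        qed
      qed
    qed
    then show ?thesis using jr' by (simp add: Valid_def)
  qed
  have BBj: "BB j = BE a" using BB_eq by (simp add: BB_def)
  have bbj: "bb j = b" using bj by (simp add: bb_def)
  have aaj: "aa j = a"
    unfolding aa_def
  proof (rule Least_equality)
    show "be a < BB j"
    proof (cases "a < b")
      case True then show ?thesis using be_shift[of a] BE_strict[of a "Suc a"] br BBj by simp
    next
      case False
      then have "a = b" using ab by simp
      then show ?thesis using BBj BB_eq jr' k1 bj by (simp add: BB_def nn_be)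
    qed
  next
    fix R assume R: "be R < BB j"
    show "a \<le> R"
    proof (rule ccontr)
      assume "\<not> a \<le> R"
      then have "R < a" by simp
      then show False using R be_out[of R] BE_strict[of R a] ab br BBj by simp
    qed
  qed
  have "gf j R = g R" for R
  proof (cases "R < a \<or> b < R")
    case True then show ?thesis using out[OF True] by (simp add: gf_def aaj bbj)
  next
    case False
    show ?thesis
    proof (cases "R = a")
      case True
      then show ?thesis using ga_eq ab by (simp add: gf_def aaj bbj qq_def)
    next
      case False2: False
      then show ?thesis using False mid[of R] by (simp add: gf_def aaj bbj)
    qed
  qed
  then have "rf (gam j) R = rf ga R" for R using gam_props(2)[OF valid] by (simp add: g_def)
  then have "gam j = ga" using part_eq_rf[OF gam_props(1)[OF valid] pg] by simp
  then show ?thesis using valid by blast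
qed

lemma gam_bij: "bij_betw gam Valid {ga. rim_hook ga la k}"
  unfolding bij_betw_def
  using gam_inj gam_rim gam_surj by auto

lemma hook_sum:
  assumes h0: "h 0 = 1"
  shows "(\<Sum>j<r. JT h (nn[j := nn ! j + k])) =
    (\<Sum>ga\<in>{ga. rim_hook ga la k}. (-1) ^ ht ga la * JT h (shifted_parts ga))"
proof -
  have "(\<Sum>j<r. JT h (nn[j := nn ! j + k])) = (\<Sum>j\<in>Valid. JT h (nn[j := nn ! j + k]))"
    using invalid_zero by (intro sum.mono_neutral_right) (auto simp: Valid_def)
  also have "\<dots> = (\<Sum>j\<in>Valid. (-1) ^ ht (gam j) la * JT h (shifted_parts (gam j)))"
  proof (intro sum.cong refl)
    fix j assume j: "j \<in> Valid"
    have "JT h (nn[j := nn ! j + k]) = (-1) ^ qq j * JT h (shifted_parts (gam j @ replicate (r - length (gam j)) 0))"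
      using gam_JT[OF j] by (simp add: BB_def)
    also have "JT h (shifted_parts (gam j @ replicate (r - length (gam j)) 0)) = JT h (shifted_parts (gam j))"
      by (rule JT_sp_pad_gen[of h, OF h0])
    finally show "JT h (nn[j := nn ! j + k]) = (-1) ^ ht (gam j) la * JT h (shifted_parts (gam j))"
      by (simp add: gam_ht[OF j])
  qed
  also have "\<dots> = (\<Sum>ga\<in>{ga. rim_hook ga la k}. (-1) ^ ht ga la * JT h (shifted_parts ga))"
    by (rule sum.reindex_bij_betw[OF gam_bij, of "\<lambda>ga. (-1) ^ ht ga la * JT h (shifted_parts ga)"])
  finally show ?thesis .
qed

lemma nn_pre: "j < k \<Longrightarrow> nn ! j = j"
  using rk by (simp add: nn_nth l_zero)

lemma JT_nn: "h 0 = 1 \<Longrightarrow> JT h nn = JT h (shifted_parts la)"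
  unfolding nn_def by (rule JT_sp_pad_gen)

end

lemma smult_sum_right: "smult a (sum f S) = (\<Sum>x\<in>S. smult a (f x))"
  by (induction S rule: infinite_finite_induct) (simp_all add: smult_add_right)

lemma smult_neg1_pow: "smult ((-1) ^ n) p = (-1) ^ n * (p :: 'a::comm_ring_1 poly)"
  by (induction n) (simp_all add: smult_minus_left)

lemma const_mult: "[:a:] * p = smult a p"
  by simp

lemma main_k:
  fixes A :: "nat \<Rightarrow> 'a::field_char_0 poly" and c :: "nat \<Rightarrow> 'a" and la :: "nat list"
  assumes ap: "appell A"
    and hc: "\<forall>k\<ge>1. fps_nth (fps_log (appell_f A)) k = c k / fact k"
    and part: "is_partition la" and k1: "1 \<le> k"
  shows "(\<Sum>ga\<in>{ga. rim_hook ga la k}. smult ((-1) ^ ht ga la * of_nat (F ga)) (appell_schur A ga))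
     = smult (fact (psize la + k)) (pp c k * JT (Bp A) (shifted_parts la))"
proof -
  interpret H: hk la k "length la + k" by unfold_locales (use part k1 in auto)
  have B0: "Bp A 0 = 1" using ap by (simp add: Bp_def appell_def)
  have "(\<Sum>ga\<in>{ga. rim_hook ga la k}. smult ((-1) ^ ht ga la * of_nat (F ga)) (appell_schur A ga))
      = (\<Sum>ga\<in>{ga. rim_hook ga la k}. smult (fact (psize la + k)) (smult ((-1) ^ ht ga la) (JT (Bp A) (shifted_parts ga))))"
  proof (intro sum.cong refl)
    fix ga assume "ga \<in> {ga. rim_hook ga la k}"
    then have rh: "rim_hook ga la k" by simp
    then have pg: "is_partition ga" and ps: "psize ga = psize la + k" by (auto simp: rim_hook_def)
    have "smult ((-1) ^ ht ga la * of_nat (F ga)) (appell_schur A ga)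
        = smult ((-1) ^ ht ga la) (smult (of_nat (F ga)) (appell_schur A ga))" by simp
    also have "smult (of_nat (F ga)) (appell_schur A ga) = smult (fact (psize ga)) (JT (Bp A) (shifted_parts ga))"
      by (rule FA_JT[OF ap part_wdec[OF pg]])
    finally show "smult ((-1) ^ ht ga la * of_nat (F ga)) (appell_schur A ga)
        = smult (fact (psize la + k)) (smult ((-1) ^ ht ga la) (JT (Bp A) (shifted_parts ga)))"
      using ps by (simp add: mult_ac)
  qed
  also have "\<dots> = smult (fact (psize la + k)) (\<Sum>ga\<in>{ga. rim_hook ga la k}. smult ((-1) ^ ht ga la) (JT (Bp A) (shifted_parts ga)))"
    by (simp only: smult_sum_right)
  also have "(\<Sum>ga\<in>{ga. rim_hook ga la k}. smult ((-1) ^ ht ga la) (JT (Bp A) (shifted_parts ga)))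
      = (\<Sum>ga\<in>{ga. rim_hook ga la k}. (-1) ^ ht ga la * JT (Bp A) (shifted_parts ga))"
    by (simp only: smult_neg1_pow)
  also have "(\<Sum>ga\<in>{ga. rim_hook ga la k}. (-1) ^ ht ga la * JT (Bp A) (shifted_parts ga))
      = (\<Sum>j<length la + k. JT (Bp A) (H.nn[j := H.nn ! j + k]))"
    by (rule H.hook_sum[of "Bp A", OF B0, symmetric])
  also have "\<dots> = pp c k * JT (Bp A) H.nn"
    using MN_B[OF ap hc k1, of H.nn] H.nn_pre H.nn_len by simp
  also have "JT (Bp A) H.nn = JT (Bp A) (shifted_parts la)" by (rule H.JT_nn[of "Bp A", OF B0])
  finally show ?thesis .
qed

lemma covers_rim: "covers ga la \<longleftrightarrow> rim_hook ga la 1"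
proof
  assume cv: "covers ga la"
  then have sub: "diagram la \<subseteq> diagram ga" and ps: "psize ga = psize la + 1" by (auto simp: covers_def)
  have "card (skew ga la) = 1"
    using sub ps by (simp add: skew_def card_Diff_subset finite_diagram card_diagram)
  then obtain x where x: "skew ga la = {x}" by (meson card_1_singletonE)
  have cc: "cell_connected (skew ga la)" by (simp add: x cell_connected_def)
  have n2: "no_2x2 (skew ga la)" by (auto simp: x no_2x2_def)
  show "rim_hook ga la 1" using cv cc n2 by (simp add: covers_def rim_hook_def)
qed (simp add: covers_def rim_hook_def)

lemma rim1_ht: "rim_hook ga la 1 \<Longrightarrow> ht ga la = 0"
proof -
  assume rh: "rim_hook ga la 1"
  then have sub: "diagram la \<subseteq> diagram ga" and ps: "psize ga = psize la + 1" by (auto simp: rim_hook_def)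
  have "card (skew ga la) = 1"
    using sub ps by (simp add: skew_def card_Diff_subset finite_diagram card_diagram)
  then obtain x where x: "skew ga la = {x}" by (meson card_1_singletonE)
  then show ?thesis by (simp add: ht_def)
qed

theorem theorem6p2:
  fixes A :: "nat \<Rightarrow> 'a::field_char_0 poly" and c :: "nat \<Rightarrow> 'a" and la :: "nat list"
  assumes "appell A"
    and "\<forall>k\<ge>1. fps_nth (fps_log (appell_f A)) k = c k / fact k"
    and "is_partition la"
  shows "smult (of_nat ((psize la + 1) * F la)) ([:c 1, 1:] * appell_schur A la)
           = (\<Sum>ga\<in>{ga. covers ga la}. smult (of_nat (F ga)) (appell_schur A ga))
         \<and> (\<forall>k\<ge>2.
           smult (of_nat k * c k * of_nat ((psize la + k) choose k) * of_nat (F la)) (appell_schur A la)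
           = (\<Sum>ga\<in>{ga. rim_hook ga la k}. smult ((-1) ^ ht ga la * of_nat (F ga)) (appell_schur A ga)))"
proof -
  note ap = assms(1) and hc = assms(2) and part = assms(3)
  define N where "N = psize la"
  define J where "J = JT (Bp A) (shifted_parts la)"
  have FA: "smult (of_nat (F la)) (appell_schur A la) = smult (fact N) J"
    unfolding N_def J_def by (rule FA_JT[OF ap part_wdec[OF part]])
  have part1: "smult (of_nat ((psize la + 1) * F la)) ([:c 1, 1:] * appell_schur A la)
           = (\<Sum>ga\<in>{ga. covers ga la}. smult (of_nat (F ga)) (appell_schur A ga))"
  proof -
    have "(\<Sum>ga\<in>{ga. covers ga la}. smult (of_nat (F ga)) (appell_schur A ga))
        = (\<Sum>ga\<in>{ga. rim_hook ga la 1}. smult ((-1) ^ ht ga la * of_nat (F ga)) (appell_schur A ga))"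
      by (intro sum.cong) (auto simp: covers_rim rim1_ht)
    also have "\<dots> = smult (fact (N + 1)) (pp c 1 * J)"
      using main_k[OF ap hc part, of 1] by (simp add: N_def J_def)
    also have "pp c 1 = [:c 1, 1:]" by (simp add: pp_def)
    finally have r: "(\<Sum>ga\<in>{ga. covers ga la}. smult (of_nat (F ga)) (appell_schur A ga)) = smult (fact (N + 1)) ([:c 1, 1:] * J)" .
    have "smult (of_nat ((psize la + 1) * F la)) ([:c 1, 1:] * appell_schur A la)
        = [:c 1, 1:] * smult (of_nat ((psize la + 1) * F la)) (appell_schur A la)"
      by (simp only: mult_smult_right)
    also have "smult (of_nat ((psize la + 1) * F la)) (appell_schur A la)
        = smult (of_nat (N + 1)) (smult (of_nat (F la)) (appell_schur A la))"
      by (simp only: smult_smult of_nat_mult N_def)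
    also have "\<dots> = smult (fact (N + 1)) J"
      by (simp only: FA smult_smult) (simp add: algebra_simps)
    also have "[:c 1, 1:] * smult (fact (N + 1)) J = smult (fact (N + 1)) ([:c 1, 1:] * J)"
      by (simp only: mult_smult_right)
    finally show ?thesis using r by simp
  qed
  have part2: "smult (of_nat k * c k * of_nat ((psize la + k) choose k) * of_nat (F la)) (appell_schur A la)
           = (\<Sum>ga\<in>{ga. rim_hook ga la k}. smult ((-1) ^ ht ga la * of_nat (F ga)) (appell_schur A ga))"
    if k: "k \<ge> 2" for k
  proof -
    have "(\<Sum>ga\<in>{ga. rim_hook ga la k}. smult ((-1) ^ ht ga la * of_nat (F ga)) (appell_schur A ga))
        = smult (fact (N + k)) (pp c k * J)"
      using main_k[OF ap hc part, of k] k by (simp add: N_def J_def)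
    also have "pp c k = [: of_nat k * c k / fact k :]" using k by (simp add: pp_def)
    also have "smult (fact (N + k)) ([: of_nat k * c k / fact k :] * J) = smult (fact (N + k) * (of_nat k * c k / fact k)) J"
      by simp
    finally have r: "(\<Sum>ga\<in>{ga. rim_hook ga la k}. smult ((-1) ^ ht ga la * of_nat (F ga)) (appell_schur A ga))
        = smult (fact (N + k) * (of_nat k * c k / fact k)) J" .
    have "smult (of_nat k * c k * of_nat ((psize la + k) choose k) * of_nat (F la)) (appell_schur A la)
        = smult (of_nat k * c k * of_nat ((N + k) choose k)) (smult (of_nat (F la)) (appell_schur A la))"
      by (simp add: N_def mult_ac)
    also have "\<dots> = smult (of_nat k * c k * of_nat ((N + k) choose k) * fact N) J" by (simp add: FA)
    also have "(of_nat k * c k * of_nat ((N + k) choose k) * fact N :: 'a) = fact (N + k) * (of_nat k * c k / fact k)"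
    proof -
      have "(of_nat ((N + k) choose k) :: 'a) = fact (N + k) / (fact k * fact N)"
        using binomial_fact[of k "N + k"] by simp
      then show ?thesis by (simp add: field_simps)
    qed
    finally show ?thesis using r by simp
  qed
  show ?thesis using part1 part2 by blast
qed


end
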